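(* For an affine Coxeter system $(W,S)$ of rank two, $H_1(u)H_2(u)=\mathrm{Alt}(W)(u)$. Explicitly, $\mathrm{Alt}(W)(u)^{-1}$ equals $(1-u^3)^2$ in type $\tilde A_2$, $(1-u^4)(1-u^3)$ in type $\tilde C_2$, and $(1-u^5)(1-u^3)$ in type $\tilde G_2$.
   Context: Let $(W,S)$, $S=\{s_1,s_2,s_3\}$, be an affine Coxeter system of rank two, where $m_{ij}$ denotes the order of $s_is_j$, labelled so that $(m_{12},m_{23},m_{13})$ equals $(3,3,3)$ (type $\tilde A_2$), $(4,2,4)$ (type $\tilde C_2$) or $(6,2,3)$ (type $\tilde G_2$). $\ell$ is the length function with respect to $S$. For $D\subseteq W$, $D(u)=\sum_{w\in D}u^{\ell(w)}\in\mathbb{Z}[[u]]$; for $I\subseteq S$, $W_I$ is the subgroup generated by $I$; $\mathrm{Alt}(W)(u)=\prod_{I\subseteq S}W_I(u)^{(-1)^{|I|+|S|}}$. Define: in type $\tilde A_2$, $w_1=s_3s_2s_1$, $w_2=s_3s_1s_2$; in type $\tilde C_2$, $w_1=s_3s_1s_2s_1$, $w_2=s_3s_1s_2$; in type $\tilde G_2$, $w_1=s_3s_1s_2$, $w_2=s_3s_1s_2s_1s_2$. Let $H_i=\{w_i^k:k\in\mathbb{Z}_{\ge0}\}$. *)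

theory Defs
  imports "HOL-Computational_Algebra.Formal_Power_Series"
begin

datatype gen = s1 | s2 | s3

definition S :: "gen set" where "S = {s1, s2, s3}"

datatype afftype = A2t | C2t | G2t

fun cm :: "afftype \<Rightarrow> gen \<Rightarrow> gen \<Rightarrow> nat" where
  "cm T a b = (if a = b then 1 else
     (let p = (if {a,b} = {s1,s2} then 0 else if {a,b} = {s2,s3} then (1::nat) else 2) in
      (case T of
         A2t \<Rightarrow> 3
       | C2t \<Rightarrow> [4,2,4] ! p
       | G2t \<Rightarrow> [6,2,3] ! p)))"

text \<open>Equality in W of words over S: the congruence on words generated by the
  Coxeter relations (s t)^(m_st) = 1 (for s = t this is s s = 1). Since every generator
  is an involution, the monoid so presented is the Coxeter group W.\<close>
inductive cox_eq :: "afftype \<Rightarrow> gen list \<Rightarrow> gen list \<Rightarrow> bool" for T where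
  refl: "cox_eq T w w"
| sym: "cox_eq T u v \<Longrightarrow> cox_eq T v u"
| trans: "cox_eq T u v \<Longrightarrow> cox_eq T v w \<Longrightarrow> cox_eq T u w"
| rel: "cox_eq T (u @ concat (replicate (cm T s t) [s, t]) @ v) (u @ v)"

definition cls :: "afftype \<Rightarrow> gen list \<Rightarrow> gen list set" where
  "cls T w = {v. cox_eq T w v}"

definition Wgrp :: "afftype \<Rightarrow> gen list set set" where
  "Wgrp T = range (cls T)"

definition WI :: "afftype \<Rightarrow> gen set \<Rightarrow> gen list set set" where
  "WI T I = cls T ` {w. set w \<subseteq> I}"

definition len :: "afftype \<Rightarrow> gen list set \<Rightarrow> nat" where
  "len T x = (LEAST n. \<exists>w \<in> x. length w = n)"

definition gser :: "afftype \<Rightarrow> gen list set set \<Rightarrow> real fps" where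
  "gser T D = Abs_fps (\<lambda>n. of_nat (card {x \<in> D. len T x = n}))"

definition Alt :: "afftype \<Rightarrow> real fps" where
  "Alt T = (\<Prod>I\<in>Pow S. if even (card I + card S) then gser T (WI T I)
                         else inverse (gser T (WI T I)))"

fun word1 :: "afftype \<Rightarrow> gen list" where
  "word1 A2t = [s3, s2, s1]"
| "word1 C2t = [s3, s1, s2, s1]"
| "word1 G2t = [s3, s1, s2]"

fun word2 :: "afftype \<Rightarrow> gen list" where
  "word2 A2t = [s3, s1, s2]"
| "word2 C2t = [s3, s1, s2]"
| "word2 G2t = [s3, s1, s2, s1, s2]"

definition Hset :: "afftype \<Rightarrow> gen list \<Rightarrow> gen list set set" where
  "Hset T w = {cls T (concat (replicate k w)) | k. True}"

fun altinv :: "afftype \<Rightarrow> real fps" where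
  "altinv A2t = (1 - fps_X ^ 3) ^ 2"
| "altinv C2t = (1 - fps_X ^ 4) * (1 - fps_X ^ 3)"
| "altinv G2t = (1 - fps_X ^ 5) * (1 - fps_X ^ 3)"

end

theory Submission
  imports Defs
begin

unbundle fps_syntax


fun NN :: "afftype \<Rightarrow> int" where
  "NN A2t = 3" | "NN C2t = 4" | "NN G2t = 6"

fun F :: "afftype \<Rightarrow> gen \<Rightarrow> int \<times> int \<Rightarrow> int \<times> int" where
  "F A2t s1 (X,Y) = (- X, X + Y)"
| "F A2t s2 (X,Y) = (X + Y, - Y)"
| "F A2t s3 (X,Y) = (3 - Y, 3 - X)"
| "F C2t s1 (X,Y) = (- X, 2*X + Y)"
| "F C2t s2 (X,Y) = (X + Y, - Y)"
| "F C2t s3 (X,Y) = (4 - X - Y, Y)"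
| "F G2t s1 (X,Y) = (X + Y, - Y)"
| "F G2t s2 (X,Y) = (- X, 3*X + Y)"
| "F G2t s3 (X,Y) = (X, 6 - 3*X - Y)"

fun forms :: "afftype \<Rightarrow> int \<times> int \<Rightarrow> int list" where
  "forms A2t (X,Y) = [X, Y, X + Y]"
| "forms C2t (X,Y) = [X, Y, X + Y, 2*X + Y]"
| "forms G2t (X,Y) = [X, Y, X + Y, 2*X + Y, 3*X + Y, 3*X + 2*Y]"

fun desc :: "afftype \<Rightarrow> gen \<Rightarrow> int \<times> int \<Rightarrow> bool" where
  "desc A2t s1 (X,Y) = (X < 0)"
| "desc A2t s2 (X,Y) = (Y < 0)"
| "desc A2t s3 (X,Y) = (3 < X + Y)"
| "desc C2t s1 (X,Y) = (X < 0)"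
| "desc C2t s2 (X,Y) = (Y < 0)"
| "desc C2t s3 (X,Y) = (4 < 2*X + Y)"
| "desc G2t s1 (X,Y) = (Y < 0)"
| "desc G2t s2 (X,Y) = (X < 0)"
| "desc G2t s3 (X,Y) = (6 < 3*X + 2*Y)"

definition L :: "afftype \<Rightarrow> int \<times> int \<Rightarrow> int" where
  "L T q = sum_list (map (\<lambda>v. \<bar>v div NN T\<bar>) (forms T q))"

definition gp :: "afftype \<Rightarrow> int \<times> int \<Rightarrow> bool" where
  "gp T q = (\<forall>v\<in>set (forms T q). v mod NN T \<noteq> 0)"

lemma dpos: "a = k*n + v \<Longrightarrow> (0::int) < n \<Longrightarrow> a div n = k + v div n"
  by simp
lemma dneg: "a = (c+1)*n - v \<Longrightarrow> (0::int) < n \<Longrightarrow> v mod n \<noteq> 0 \<Longrightarrow> a div n = c - v div n"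
proof -
  assume a: "a = (c+1)*n - v" "0 < n" "v mod n \<noteq> 0"
  have e: "a = (-v) + (c+1)*n" using a by simp
  have "((-v) + (c+1)*n) div n = (c+1) + (-v) div n" using a(2) div_mult_self1[of n "-v" "c+1"] by simp
  hence "a div n = (c+1) + (-v) div n" using e by simp
  also have "(-v) div n = - (v div n) - 1" using a(2,3) by (simp add: zdiv_zminus1_eq_if)
  finally show ?thesis by simp
qed
lemma mpos: "a = k*n + v \<Longrightarrow> (0::int) < n \<Longrightarrow> v mod n \<noteq> 0 \<Longrightarrow> a mod n \<noteq> 0"
  by simp
lemma mneg: "a = k*n - v \<Longrightarrow> (0::int) < n \<Longrightarrow> v mod n \<noteq> 0 \<Longrightarrow> a mod n \<noteq> 0"
proof -
  assume a: "a = k*n - v" "0 < n" "v mod n \<noteq> 0"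
  have e: "a = (-v) + k*n" using a by simp
  have "((-v) + k*n) mod n = (-v) mod n" by (rule mod_mult_self1)
  hence "a mod n = (-v) mod n" using e by simp
  also have "\<dots> \<noteq> 0"
  proof -
    have lt: "v mod n < n" using a(2) by simp
    have "(-v) mod n = n - v mod n" using a(3) by (simp add: zmod_zminus1_eq_if)
    thus ?thesis using lt by linarith
  qed
  finally show ?thesis .
qed
lemma mb1: "v mod n \<noteq> 0 \<Longrightarrow> (0::int) < n \<Longrightarrow> n * (v div n) < v"
  by (metis div_mult_mod_eq le_less less_add_same_cancel1 mult.commute pos_mod_sign)
lemma mb2: "v mod n \<noteq> 0 \<Longrightarrow> (0::int) < n \<Longrightarrow> v < n * (v div n) + n"
  by (metis add.commute div_mult_mod_eq mult.commute add_less_cancel_right pos_mod_bound)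
lemmas mod_bounds = mb1 mb2

lemma LF_A2t_s1:
  assumes "gp A2t (X,Y)"
  shows "L A2t (F A2t s1 (X,Y)) = (if desc A2t s1 (X,Y) then L A2t (X,Y) - 1 else L A2t (X,Y) + 1)"
    and "gp A2t (F A2t s1 (X,Y))"
proof -
  have m: "(X) mod 3 \<noteq> 0" "(Y) mod 3 \<noteq> 0" "(X + Y) mod 3 \<noteq> 0" using assms by (simp_all add: gp_def)
  have b0: "3 * ((X) div 3) < X" "X < 3 * ((X) div 3) + 3" by (rule mb1[OF m(1)], simp) (rule mb2[OF m(1)], simp)
  have b1: "3 * ((Y) div 3) < Y" "Y < 3 * ((Y) div 3) + 3" by (rule mb1[OF m(2)], simp) (rule mb2[OF m(2)], simp)
  have b2: "3 * ((X + Y) div 3) < X + Y" "X + Y < 3 * ((X + Y) div 3) + 3" by (rule mb1[OF m(3)], simp) (rule mb2[OF m(3)], simp)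
  have e0: "(- X) div 3 = -1 - (X) div 3" by (rule dneg[where c="-1"], simp, simp, rule m(1))
  have e1: "((- X) + (X + Y)) div 3 = 0 + (Y) div 3" by (rule dpos[where k=0]; simp)
  have n0: "(- X) mod 3 \<noteq> 0" by (rule mneg[where k=0 and v="X"], simp, simp, rule m(1))
  have n1: "((- X) + (X + Y)) mod 3 \<noteq> 0" by (rule mpos[where k=0 and v="Y"], simp, simp, rule m(2))
  have sp: "\<bar>-1 - (X) div 3\<bar> = (if X < 0 then \<bar>(X) div 3\<bar> - 1 else \<bar>(X) div 3\<bar> + 1)" using b0 by arith
  show "L A2t (F A2t s1 (X,Y)) = (if desc A2t s1 (X,Y) then L A2t (X,Y) - 1 else L A2t (X,Y) + 1)"
    unfolding L_def NN.simps F.simps forms.simps desc.simps list.map sum_list_simps e0 e1 sp by simp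
  show "gp A2t (F A2t s1 (X,Y))" unfolding gp_def NN.simps F.simps forms.simps list.set ball_simps using m n0 n1 by blast
qed

lemma LF_A2t_s2:
  assumes "gp A2t (X,Y)"
  shows "L A2t (F A2t s2 (X,Y)) = (if desc A2t s2 (X,Y) then L A2t (X,Y) - 1 else L A2t (X,Y) + 1)"
    and "gp A2t (F A2t s2 (X,Y))"
proof -
  have m: "(X) mod 3 \<noteq> 0" "(Y) mod 3 \<noteq> 0" "(X + Y) mod 3 \<noteq> 0" using assms by (simp_all add: gp_def)
  have b0: "3 * ((X) div 3) < X" "X < 3 * ((X) div 3) + 3" by (rule mb1[OF m(1)], simp) (rule mb2[OF m(1)], simp)
  have b1: "3 * ((Y) div 3) < Y" "Y < 3 * ((Y) div 3) + 3" by (rule mb1[OF m(2)], simp) (rule mb2[OF m(2)], simp)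
  have b2: "3 * ((X + Y) div 3) < X + Y" "X + Y < 3 * ((X + Y) div 3) + 3" by (rule mb1[OF m(3)], simp) (rule mb2[OF m(3)], simp)
  have e0: "(- Y) div 3 = -1 - (Y) div 3" by (rule dneg[where c="-1"], simp, simp, rule m(2))
  have e1: "((X + Y) + (- Y)) div 3 = 0 + (X) div 3" by (rule dpos[where k=0]; simp)
  have n0: "(- Y) mod 3 \<noteq> 0" by (rule mneg[where k=0 and v="Y"], simp, simp, rule m(2))
  have n1: "((X + Y) + (- Y)) mod 3 \<noteq> 0" by (rule mpos[where k=0 and v="X"], simp, simp, rule m(1))
  have sp: "\<bar>-1 - (Y) div 3\<bar> = (if Y < 0 then \<bar>(Y) div 3\<bar> - 1 else \<bar>(Y) div 3\<bar> + 1)" using b1 by arith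
  show "L A2t (F A2t s2 (X,Y)) = (if desc A2t s2 (X,Y) then L A2t (X,Y) - 1 else L A2t (X,Y) + 1)"
    unfolding L_def NN.simps F.simps forms.simps desc.simps list.map sum_list_simps e0 e1 sp by simp
  show "gp A2t (F A2t s2 (X,Y))" unfolding gp_def NN.simps F.simps forms.simps list.set ball_simps using m n0 n1 by blast
qed

lemma LF_A2t_s3:
  assumes "gp A2t (X,Y)"
  shows "L A2t (F A2t s3 (X,Y)) = (if desc A2t s3 (X,Y) then L A2t (X,Y) - 1 else L A2t (X,Y) + 1)"
    and "gp A2t (F A2t s3 (X,Y))"
proof -
  have m: "(X) mod 3 \<noteq> 0" "(Y) mod 3 \<noteq> 0" "(X + Y) mod 3 \<noteq> 0" using assms by (simp_all add: gp_def)
  have b0: "3 * ((X) div 3) < X" "X < 3 * ((X) div 3) + 3" by (rule mb1[OF m(1)], simp) (rule mb2[OF m(1)], simp)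
  have b1: "3 * ((Y) div 3) < Y" "Y < 3 * ((Y) div 3) + 3" by (rule mb1[OF m(2)], simp) (rule mb2[OF m(2)], simp)
  have b2: "3 * ((X + Y) div 3) < X + Y" "X + Y < 3 * ((X + Y) div 3) + 3" by (rule mb1[OF m(3)], simp) (rule mb2[OF m(3)], simp)
  have e0: "(3 - Y) div 3 = 0 - (Y) div 3" by (rule dneg[where c="0"], simp, simp, rule m(2))
  have e1: "(3 - X) div 3 = 0 - (X) div 3" by (rule dneg[where c="0"], simp, simp, rule m(1))
  have e2: "((3 - Y) + (3 - X)) div 3 = 1 - (X + Y) div 3" by (rule dneg[where c="1"], simp, simp, rule m(3))
  have n0: "(3 - Y) mod 3 \<noteq> 0" by (rule mneg[where k=1 and v="Y"], simp, simp, rule m(2))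
  have n1: "(3 - X) mod 3 \<noteq> 0" by (rule mneg[where k=1 and v="X"], simp, simp, rule m(1))
  have n2: "((3 - Y) + (3 - X)) mod 3 \<noteq> 0" by (rule mneg[where k=2 and v="X + Y"], simp, simp, rule m(3))
  have sp: "\<bar>1 - (X + Y) div 3\<bar> = (if 3 < X + Y then \<bar>(X + Y) div 3\<bar> - 1 else \<bar>(X + Y) div 3\<bar> + 1)" using b2 by arith
  show "L A2t (F A2t s3 (X,Y)) = (if desc A2t s3 (X,Y) then L A2t (X,Y) - 1 else L A2t (X,Y) + 1)"
    unfolding L_def NN.simps F.simps forms.simps desc.simps list.map sum_list_simps e0 e1 e2 sp by simp
  show "gp A2t (F A2t s3 (X,Y))" unfolding gp_def NN.simps F.simps forms.simps list.set ball_simps using m n0 n1 n2 by blast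
qed

lemma LF_C2t_s1:
  assumes "gp C2t (X,Y)"
  shows "L C2t (F C2t s1 (X,Y)) = (if desc C2t s1 (X,Y) then L C2t (X,Y) - 1 else L C2t (X,Y) + 1)"
    and "gp C2t (F C2t s1 (X,Y))"
proof -
  have m: "(X) mod 4 \<noteq> 0" "(Y) mod 4 \<noteq> 0" "(X + Y) mod 4 \<noteq> 0" "(2*X + Y) mod 4 \<noteq> 0" using assms by (simp_all add: gp_def)
  have b0: "4 * ((X) div 4) < X" "X < 4 * ((X) div 4) + 4" by (rule mb1[OF m(1)], simp) (rule mb2[OF m(1)], simp)
  have b1: "4 * ((Y) div 4) < Y" "Y < 4 * ((Y) div 4) + 4" by (rule mb1[OF m(2)], simp) (rule mb2[OF m(2)], simp)
  have b2: "4 * ((X + Y) div 4) < X + Y" "X + Y < 4 * ((X + Y) div 4) + 4" by (rule mb1[OF m(3)], simp) (rule mb2[OF m(3)], simp)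
  have b3: "4 * ((2*X + Y) div 4) < 2*X + Y" "2*X + Y < 4 * ((2*X + Y) div 4) + 4" by (rule mb1[OF m(4)], simp) (rule mb2[OF m(4)], simp)
  have e0: "(- X) div 4 = -1 - (X) div 4" by (rule dneg[where c="-1"], simp, simp, rule m(1))
  have e1: "((- X) + (2*X + Y)) div 4 = 0 + (X + Y) div 4" by (rule dpos[where k=0]; simp)
  have e2: "(2 * ((- X)) + (2*X + Y)) div 4 = 0 + (Y) div 4" by (rule dpos[where k=0]; simp)
  have n0: "(- X) mod 4 \<noteq> 0" by (rule mneg[where k=0 and v="X"], simp, simp, rule m(1))
  have n1: "((- X) + (2*X + Y)) mod 4 \<noteq> 0" by (rule mpos[where k=0 and v="X + Y"], simp, simp, rule m(3))
  have n2: "(2 * ((- X)) + (2*X + Y)) mod 4 \<noteq> 0" by (rule mpos[where k=0 and v="Y"], simp, simp, rule m(2))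
  have sp: "\<bar>-1 - (X) div 4\<bar> = (if X < 0 then \<bar>(X) div 4\<bar> - 1 else \<bar>(X) div 4\<bar> + 1)" using b0 by arith
  show "L C2t (F C2t s1 (X,Y)) = (if desc C2t s1 (X,Y) then L C2t (X,Y) - 1 else L C2t (X,Y) + 1)"
    unfolding L_def NN.simps F.simps forms.simps desc.simps list.map sum_list_simps e0 e1 e2 sp by simp
  show "gp C2t (F C2t s1 (X,Y))" unfolding gp_def NN.simps F.simps forms.simps list.set ball_simps using m n0 n1 n2 by blast
qed

lemma LF_C2t_s2:
  assumes "gp C2t (X,Y)"
  shows "L C2t (F C2t s2 (X,Y)) = (if desc C2t s2 (X,Y) then L C2t (X,Y) - 1 else L C2t (X,Y) + 1)"
    and "gp C2t (F C2t s2 (X,Y))"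
proof -
  have m: "(X) mod 4 \<noteq> 0" "(Y) mod 4 \<noteq> 0" "(X + Y) mod 4 \<noteq> 0" "(2*X + Y) mod 4 \<noteq> 0" using assms by (simp_all add: gp_def)
  have b0: "4 * ((X) div 4) < X" "X < 4 * ((X) div 4) + 4" by (rule mb1[OF m(1)], simp) (rule mb2[OF m(1)], simp)
  have b1: "4 * ((Y) div 4) < Y" "Y < 4 * ((Y) div 4) + 4" by (rule mb1[OF m(2)], simp) (rule mb2[OF m(2)], simp)
  have b2: "4 * ((X + Y) div 4) < X + Y" "X + Y < 4 * ((X + Y) div 4) + 4" by (rule mb1[OF m(3)], simp) (rule mb2[OF m(3)], simp)
  have b3: "4 * ((2*X + Y) div 4) < 2*X + Y" "2*X + Y < 4 * ((2*X + Y) div 4) + 4" by (rule mb1[OF m(4)], simp) (rule mb2[OF m(4)], simp)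
  have e0: "(- Y) div 4 = -1 - (Y) div 4" by (rule dneg[where c="-1"], simp, simp, rule m(2))
  have e1: "((X + Y) + (- Y)) div 4 = 0 + (X) div 4" by (rule dpos[where k=0]; simp)
  have e2: "(2 * ((X + Y)) + (- Y)) div 4 = 0 + (2*X + Y) div 4" by (rule dpos[where k=0]; simp)
  have n0: "(- Y) mod 4 \<noteq> 0" by (rule mneg[where k=0 and v="Y"], simp, simp, rule m(2))
  have n1: "((X + Y) + (- Y)) mod 4 \<noteq> 0" by (rule mpos[where k=0 and v="X"], simp, simp, rule m(1))
  have n2: "(2 * ((X + Y)) + (- Y)) mod 4 \<noteq> 0" by (rule mpos[where k=0 and v="2*X + Y"], simp, simp, rule m(4))
  have sp: "\<bar>-1 - (Y) div 4\<bar> = (if Y < 0 then \<bar>(Y) div 4\<bar> - 1 else \<bar>(Y) div 4\<bar> + 1)" using b1 by arith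
  show "L C2t (F C2t s2 (X,Y)) = (if desc C2t s2 (X,Y) then L C2t (X,Y) - 1 else L C2t (X,Y) + 1)"
    unfolding L_def NN.simps F.simps forms.simps desc.simps list.map sum_list_simps e0 e1 e2 sp by simp
  show "gp C2t (F C2t s2 (X,Y))" unfolding gp_def NN.simps F.simps forms.simps list.set ball_simps using m n0 n1 n2 by blast
qed

lemma LF_C2t_s3:
  assumes "gp C2t (X,Y)"
  shows "L C2t (F C2t s3 (X,Y)) = (if desc C2t s3 (X,Y) then L C2t (X,Y) - 1 else L C2t (X,Y) + 1)"
    and "gp C2t (F C2t s3 (X,Y))"
proof -
  have m: "(X) mod 4 \<noteq> 0" "(Y) mod 4 \<noteq> 0" "(X + Y) mod 4 \<noteq> 0" "(2*X + Y) mod 4 \<noteq> 0" using assms by (simp_all add: gp_def)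
  have b0: "4 * ((X) div 4) < X" "X < 4 * ((X) div 4) + 4" by (rule mb1[OF m(1)], simp) (rule mb2[OF m(1)], simp)
  have b1: "4 * ((Y) div 4) < Y" "Y < 4 * ((Y) div 4) + 4" by (rule mb1[OF m(2)], simp) (rule mb2[OF m(2)], simp)
  have b2: "4 * ((X + Y) div 4) < X + Y" "X + Y < 4 * ((X + Y) div 4) + 4" by (rule mb1[OF m(3)], simp) (rule mb2[OF m(3)], simp)
  have b3: "4 * ((2*X + Y) div 4) < 2*X + Y" "2*X + Y < 4 * ((2*X + Y) div 4) + 4" by (rule mb1[OF m(4)], simp) (rule mb2[OF m(4)], simp)
  have e0: "(4 - X - Y) div 4 = 0 - (X + Y) div 4" by (rule dneg[where c="0"], simp, simp, rule m(3))
  have e1: "((4 - X - Y) + (Y)) div 4 = 0 - (X) div 4" by (rule dneg[where c="0"], simp, simp, rule m(1))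
  have e2: "(2 * ((4 - X - Y)) + (Y)) div 4 = 1 - (2*X + Y) div 4" by (rule dneg[where c="1"], simp, simp, rule m(4))
  have n0: "(4 - X - Y) mod 4 \<noteq> 0" by (rule mneg[where k=1 and v="X + Y"], simp, simp, rule m(3))
  have n1: "((4 - X - Y) + (Y)) mod 4 \<noteq> 0" by (rule mneg[where k=1 and v="X"], simp, simp, rule m(1))
  have n2: "(2 * ((4 - X - Y)) + (Y)) mod 4 \<noteq> 0" by (rule mneg[where k=2 and v="2*X + Y"], simp, simp, rule m(4))
  have sp: "\<bar>1 - (2*X + Y) div 4\<bar> = (if 4 < 2*X + Y then \<bar>(2*X + Y) div 4\<bar> - 1 else \<bar>(2*X + Y) div 4\<bar> + 1)" using b3 by arith
  show "L C2t (F C2t s3 (X,Y)) = (if desc C2t s3 (X,Y) then L C2t (X,Y) - 1 else L C2t (X,Y) + 1)"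
    unfolding L_def NN.simps F.simps forms.simps desc.simps list.map sum_list_simps e0 e1 e2 sp by simp
  show "gp C2t (F C2t s3 (X,Y))" unfolding gp_def NN.simps F.simps forms.simps list.set ball_simps using m n0 n1 n2 by blast
qed

lemma LF_G2t_s1:
  assumes "gp G2t (X,Y)"
  shows "L G2t (F G2t s1 (X,Y)) = (if desc G2t s1 (X,Y) then L G2t (X,Y) - 1 else L G2t (X,Y) + 1)"
    and "gp G2t (F G2t s1 (X,Y))"
proof -
  have m: "(X) mod 6 \<noteq> 0" "(Y) mod 6 \<noteq> 0" "(X + Y) mod 6 \<noteq> 0" "(2*X + Y) mod 6 \<noteq> 0" "(3*X + Y) mod 6 \<noteq> 0" "(3*X + 2*Y) mod 6 \<noteq> 0" using assms by (simp_all add: gp_def)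
  have b0: "6 * ((X) div 6) < X" "X < 6 * ((X) div 6) + 6" by (rule mb1[OF m(1)], simp) (rule mb2[OF m(1)], simp)
  have b1: "6 * ((Y) div 6) < Y" "Y < 6 * ((Y) div 6) + 6" by (rule mb1[OF m(2)], simp) (rule mb2[OF m(2)], simp)
  have b2: "6 * ((X + Y) div 6) < X + Y" "X + Y < 6 * ((X + Y) div 6) + 6" by (rule mb1[OF m(3)], simp) (rule mb2[OF m(3)], simp)
  have b3: "6 * ((2*X + Y) div 6) < 2*X + Y" "2*X + Y < 6 * ((2*X + Y) div 6) + 6" by (rule mb1[OF m(4)], simp) (rule mb2[OF m(4)], simp)
  have b4: "6 * ((3*X + Y) div 6) < 3*X + Y" "3*X + Y < 6 * ((3*X + Y) div 6) + 6" by (rule mb1[OF m(5)], simp) (rule mb2[OF m(5)], simp)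
  have b5: "6 * ((3*X + 2*Y) div 6) < 3*X + 2*Y" "3*X + 2*Y < 6 * ((3*X + 2*Y) div 6) + 6" by (rule mb1[OF m(6)], simp) (rule mb2[OF m(6)], simp)
  have e0: "(- Y) div 6 = -1 - (Y) div 6" by (rule dneg[where c="-1"], simp, simp, rule m(2))
  have e1: "((X + Y) + (- Y)) div 6 = 0 + (X) div 6" by (rule dpos[where k=0]; simp)
  have e2: "(2 * ((X + Y)) + (- Y)) div 6 = 0 + (2*X + Y) div 6" by (rule dpos[where k=0]; simp)
  have e3: "(3 * ((X + Y)) + (- Y)) div 6 = 0 + (3*X + 2*Y) div 6" by (rule dpos[where k=0]; simp)
  have e4: "(3 * ((X + Y)) + 2 * ((- Y))) div 6 = 0 + (3*X + Y) div 6" by (rule dpos[where k=0]; simp)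
  have n0: "(- Y) mod 6 \<noteq> 0" by (rule mneg[where k=0 and v="Y"], simp, simp, rule m(2))
  have n1: "((X + Y) + (- Y)) mod 6 \<noteq> 0" by (rule mpos[where k=0 and v="X"], simp, simp, rule m(1))
  have n2: "(2 * ((X + Y)) + (- Y)) mod 6 \<noteq> 0" by (rule mpos[where k=0 and v="2*X + Y"], simp, simp, rule m(4))
  have n3: "(3 * ((X + Y)) + (- Y)) mod 6 \<noteq> 0" by (rule mpos[where k=0 and v="3*X + 2*Y"], simp, simp, rule m(6))
  have n4: "(3 * ((X + Y)) + 2 * ((- Y))) mod 6 \<noteq> 0" by (rule mpos[where k=0 and v="3*X + Y"], simp, simp, rule m(5))
  have sp: "\<bar>-1 - (Y) div 6\<bar> = (if Y < 0 then \<bar>(Y) div 6\<bar> - 1 else \<bar>(Y) div 6\<bar> + 1)" using b1 by arith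
  show "L G2t (F G2t s1 (X,Y)) = (if desc G2t s1 (X,Y) then L G2t (X,Y) - 1 else L G2t (X,Y) + 1)"
    unfolding L_def NN.simps F.simps forms.simps desc.simps list.map sum_list_simps e0 e1 e2 e3 e4 sp by simp
  show "gp G2t (F G2t s1 (X,Y))" unfolding gp_def NN.simps F.simps forms.simps list.set ball_simps using m n0 n1 n2 n3 n4 by blast
qed

lemma LF_G2t_s2:
  assumes "gp G2t (X,Y)"
  shows "L G2t (F G2t s2 (X,Y)) = (if desc G2t s2 (X,Y) then L G2t (X,Y) - 1 else L G2t (X,Y) + 1)"
    and "gp G2t (F G2t s2 (X,Y))"
proof -
  have m: "(X) mod 6 \<noteq> 0" "(Y) mod 6 \<noteq> 0" "(X + Y) mod 6 \<noteq> 0" "(2*X + Y) mod 6 \<noteq> 0" "(3*X + Y) mod 6 \<noteq> 0" "(3*X + 2*Y) mod 6 \<noteq> 0" using assms by (simp_all add: gp_def)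
  have b0: "6 * ((X) div 6) < X" "X < 6 * ((X) div 6) + 6" by (rule mb1[OF m(1)], simp) (rule mb2[OF m(1)], simp)
  have b1: "6 * ((Y) div 6) < Y" "Y < 6 * ((Y) div 6) + 6" by (rule mb1[OF m(2)], simp) (rule mb2[OF m(2)], simp)
  have b2: "6 * ((X + Y) div 6) < X + Y" "X + Y < 6 * ((X + Y) div 6) + 6" by (rule mb1[OF m(3)], simp) (rule mb2[OF m(3)], simp)
  have b3: "6 * ((2*X + Y) div 6) < 2*X + Y" "2*X + Y < 6 * ((2*X + Y) div 6) + 6" by (rule mb1[OF m(4)], simp) (rule mb2[OF m(4)], simp)
  have b4: "6 * ((3*X + Y) div 6) < 3*X + Y" "3*X + Y < 6 * ((3*X + Y) div 6) + 6" by (rule mb1[OF m(5)], simp) (rule mb2[OF m(5)], simp)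
  have b5: "6 * ((3*X + 2*Y) div 6) < 3*X + 2*Y" "3*X + 2*Y < 6 * ((3*X + 2*Y) div 6) + 6" by (rule mb1[OF m(6)], simp) (rule mb2[OF m(6)], simp)
  have e0: "(- X) div 6 = -1 - (X) div 6" by (rule dneg[where c="-1"], simp, simp, rule m(1))
  have e1: "((- X) + (3*X + Y)) div 6 = 0 + (2*X + Y) div 6" by (rule dpos[where k=0]; simp)
  have e2: "(2 * ((- X)) + (3*X + Y)) div 6 = 0 + (X + Y) div 6" by (rule dpos[where k=0]; simp)
  have e3: "(3 * ((- X)) + (3*X + Y)) div 6 = 0 + (Y) div 6" by (rule dpos[where k=0]; simp)
  have e4: "(3 * ((- X)) + 2 * ((3*X + Y))) div 6 = 0 + (3*X + 2*Y) div 6" by (rule dpos[where k=0]; simp)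
  have n0: "(- X) mod 6 \<noteq> 0" by (rule mneg[where k=0 and v="X"], simp, simp, rule m(1))
  have n1: "((- X) + (3*X + Y)) mod 6 \<noteq> 0" by (rule mpos[where k=0 and v="2*X + Y"], simp, simp, rule m(4))
  have n2: "(2 * ((- X)) + (3*X + Y)) mod 6 \<noteq> 0" by (rule mpos[where k=0 and v="X + Y"], simp, simp, rule m(3))
  have n3: "(3 * ((- X)) + (3*X + Y)) mod 6 \<noteq> 0" by (rule mpos[where k=0 and v="Y"], simp, simp, rule m(2))
  have n4: "(3 * ((- X)) + 2 * ((3*X + Y))) mod 6 \<noteq> 0" by (rule mpos[where k=0 and v="3*X + 2*Y"], simp, simp, rule m(6))
  have sp: "\<bar>-1 - (X) div 6\<bar> = (if X < 0 then \<bar>(X) div 6\<bar> - 1 else \<bar>(X) div 6\<bar> + 1)" using b0 by arith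
  show "L G2t (F G2t s2 (X,Y)) = (if desc G2t s2 (X,Y) then L G2t (X,Y) - 1 else L G2t (X,Y) + 1)"
    unfolding L_def NN.simps F.simps forms.simps desc.simps list.map sum_list_simps e0 e1 e2 e3 e4 sp by simp
  show "gp G2t (F G2t s2 (X,Y))" unfolding gp_def NN.simps F.simps forms.simps list.set ball_simps using m n0 n1 n2 n3 n4 by blast
qed

lemma LF_G2t_s3:
  assumes "gp G2t (X,Y)"
  shows "L G2t (F G2t s3 (X,Y)) = (if desc G2t s3 (X,Y) then L G2t (X,Y) - 1 else L G2t (X,Y) + 1)"
    and "gp G2t (F G2t s3 (X,Y))"
proof -
  have m: "(X) mod 6 \<noteq> 0" "(Y) mod 6 \<noteq> 0" "(X + Y) mod 6 \<noteq> 0" "(2*X + Y) mod 6 \<noteq> 0" "(3*X + Y) mod 6 \<noteq> 0" "(3*X + 2*Y) mod 6 \<noteq> 0" using assms by (simp_all add: gp_def)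
  have b0: "6 * ((X) div 6) < X" "X < 6 * ((X) div 6) + 6" by (rule mb1[OF m(1)], simp) (rule mb2[OF m(1)], simp)
  have b1: "6 * ((Y) div 6) < Y" "Y < 6 * ((Y) div 6) + 6" by (rule mb1[OF m(2)], simp) (rule mb2[OF m(2)], simp)
  have b2: "6 * ((X + Y) div 6) < X + Y" "X + Y < 6 * ((X + Y) div 6) + 6" by (rule mb1[OF m(3)], simp) (rule mb2[OF m(3)], simp)
  have b3: "6 * ((2*X + Y) div 6) < 2*X + Y" "2*X + Y < 6 * ((2*X + Y) div 6) + 6" by (rule mb1[OF m(4)], simp) (rule mb2[OF m(4)], simp)
  have b4: "6 * ((3*X + Y) div 6) < 3*X + Y" "3*X + Y < 6 * ((3*X + Y) div 6) + 6" by (rule mb1[OF m(5)], simp) (rule mb2[OF m(5)], simp)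
  have b5: "6 * ((3*X + 2*Y) div 6) < 3*X + 2*Y" "3*X + 2*Y < 6 * ((3*X + 2*Y) div 6) + 6" by (rule mb1[OF m(6)], simp) (rule mb2[OF m(6)], simp)
  have e0: "(6 - 3*X - Y) div 6 = 0 - (3*X + Y) div 6" by (rule dneg[where c="0"], simp, simp, rule m(5))
  have e1: "((X) + (6 - 3*X - Y)) div 6 = 0 - (2*X + Y) div 6" by (rule dneg[where c="0"], simp, simp, rule m(4))
  have e2: "(2 * ((X)) + (6 - 3*X - Y)) div 6 = 0 - (X + Y) div 6" by (rule dneg[where c="0"], simp, simp, rule m(3))
  have e3: "(3 * ((X)) + (6 - 3*X - Y)) div 6 = 0 - (Y) div 6" by (rule dneg[where c="0"], simp, simp, rule m(2))
  have e4: "(3 * ((X)) + 2 * ((6 - 3*X - Y))) div 6 = 1 - (3*X + 2*Y) div 6" by (rule dneg[where c="1"], simp, simp, rule m(6))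
  have n0: "(6 - 3*X - Y) mod 6 \<noteq> 0" by (rule mneg[where k=1 and v="3*X + Y"], simp, simp, rule m(5))
  have n1: "((X) + (6 - 3*X - Y)) mod 6 \<noteq> 0" by (rule mneg[where k=1 and v="2*X + Y"], simp, simp, rule m(4))
  have n2: "(2 * ((X)) + (6 - 3*X - Y)) mod 6 \<noteq> 0" by (rule mneg[where k=1 and v="X + Y"], simp, simp, rule m(3))
  have n3: "(3 * ((X)) + (6 - 3*X - Y)) mod 6 \<noteq> 0" by (rule mneg[where k=1 and v="Y"], simp, simp, rule m(2))
  have n4: "(3 * ((X)) + 2 * ((6 - 3*X - Y))) mod 6 \<noteq> 0" by (rule mneg[where k=2 and v="3*X + 2*Y"], simp, simp, rule m(6))
  have sp: "\<bar>1 - (3*X + 2*Y) div 6\<bar> = (if 6 < 3*X + 2*Y then \<bar>(3*X + 2*Y) div 6\<bar> - 1 else \<bar>(3*X + 2*Y) div 6\<bar> + 1)" using b5 by arith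
  show "L G2t (F G2t s3 (X,Y)) = (if desc G2t s3 (X,Y) then L G2t (X,Y) - 1 else L G2t (X,Y) + 1)"
    unfolding L_def NN.simps F.simps forms.simps desc.simps list.map sum_list_simps e0 e1 e2 e3 e4 sp by simp
  show "gp G2t (F G2t s3 (X,Y))" unfolding gp_def NN.simps F.simps forms.simps list.set ball_simps using m n0 n1 n2 n3 n4 by blast
qed





declare doubleton_eq_iff[simp]

lemma Finv[simp]: "F T x (F T x q) = q"
  by (cases T; cases x; cases q) simp_all

lemma LF: assumes g: "gp T q" shows "L T (F T x q) = (if desc T x q then L T q - 1 else L T q + 1)"
proof -
  obtain X Y where q: "q = (X,Y)" by (cases q)
  show ?thesis using g unfolding q by (cases T; cases x) (simp_all only: LF_A2t_s1(1) LF_A2t_s2(1) LF_A2t_s3(1) LF_C2t_s1(1) LF_C2t_s2(1) LF_C2t_s3(1) LF_G2t_s1(1) LF_G2t_s2(1) LF_G2t_s3(1))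
qed

lemma gpF: assumes g: "gp T q" shows "gp T (F T x q)"
proof -
  obtain X Y where q: "q = (X,Y)" by (cases q)
  show ?thesis using g unfolding q by (cases T; cases x) (simp_all only: LF_A2t_s1(2) LF_A2t_s2(2) LF_A2t_s3(2) LF_C2t_s1(2) LF_C2t_s2(2) LF_C2t_s3(2) LF_G2t_s1(2) LF_G2t_s2(2) LF_G2t_s3(2))
qed

definition fw :: "afftype \<Rightarrow> gen list \<Rightarrow> int \<times> int \<Rightarrow> int \<times> int" where
  "fw T w q = foldr (F T) w q"

lemma fw_simps[simp]: "fw T [] q = q" "fw T (x#w) q = F T x (fw T w q)"
  "fw T (u@v) q = fw T u (fw T v q)"
  by (simp_all add: fw_def)

lemma Frel: "fw T (concat (replicate (cm T s t) [s,t])) q = q"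
  by (cases T; cases s; cases t; cases q) (simp_all add: numeral_eq_Suc)

lemma gp0: "gp T (1,1)"
  by (cases T) (simp_all add: gp_def)

lemma L0: "L T (1,1) = 0"
  by (cases T) (simp_all add: L_def)

lemma Lnn: "0 \<le> L T q"
  unfolding L_def by (rule sum_list_nonneg) auto

lemma L0_all: "L T q = 0 \<Longrightarrow> \<forall>v\<in>set (forms T q). v div NN T = 0"
proof -
  assume "L T q = 0"
  hence "\<forall>x\<in>set (map (\<lambda>v. \<bar>v div NN T\<bar>) (forms T q)). x = 0"
    unfolding L_def by (subst (asm) sum_list_nonneg_eq_0_iff) auto
  thus ?thesis by simp
qed

lemma Lzero: "gp T q \<Longrightarrow> L T q = 0 \<Longrightarrow> q = (1,1)"
proof (cases T; cases q)
  fix X Y assume q: "q = (X,Y)" and T: "T = A2t" and g: "gp T q" and l: "L T q = 0"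
  have m: "X mod 3 \<noteq> 0" "Y mod 3 \<noteq> 0" "(X+Y) mod 3 \<noteq> 0" using g q T by (simp_all add: gp_def)
  have b: "3 * (X div 3) < X" "3 * (Y div 3) < Y" "3 * ((X+Y) div 3) < X+Y" "X+Y < 3 * ((X+Y) div 3) + 3"
    using m by (simp_all add: mod_bounds del: abs_idempotent)
  have "\<forall>v\<in>set (forms T q). v div NN T = 0" using l by (rule L0_all)
  hence "X div 3 = 0" "Y div 3 = 0" "(X+Y) div 3 = 0" using q T by simp_all
  thus "q = (1,1)" using b q by simp
next
  fix X Y assume q: "q = (X,Y)" and T: "T = C2t" and g: "gp T q" and l: "L T q = 0"
  have m: "X mod 4 \<noteq> 0" "Y mod 4 \<noteq> 0" "(2*X+Y) mod 4 \<noteq> 0" using g q T by (simp_all add: gp_def)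
  have b: "4 * (X div 4) < X" "4 * (Y div 4) < Y" "2*X+Y < 4 * ((2*X+Y) div 4) + 4"
    using m by (simp_all add: mod_bounds del: abs_idempotent)
  have "\<forall>v\<in>set (forms T q). v div NN T = 0" using l by (rule L0_all)
  hence "X div 4 = 0" "Y div 4 = 0" "(2*X+Y) div 4 = 0" using q T by simp_all
  thus "q = (1,1)" using b q by simp
next
  fix X Y assume q: "q = (X,Y)" and T: "T = G2t" and g: "gp T q" and l: "L T q = 0"
  have m: "X mod 6 \<noteq> 0" "Y mod 6 \<noteq> 0" "(3*X+2*Y) mod 6 \<noteq> 0" using g q T by (simp_all add: gp_def)
  have b: "6 * (X div 6) < X" "6 * (Y div 6) < Y" "3*X+2*Y < 6 * ((3*X+2*Y) div 6) + 6"
    using m by (simp_all add: mod_bounds del: abs_idempotent)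
  have "\<forall>v\<in>set (forms T q). v div NN T = 0" using l by (rule L0_all)
  hence "X div 6 = 0" "Y div 6 = 0" "(3*X+2*Y) div 6 = 0" using q T by simp_all
  thus "q = (1,1)" using b q by simp
qed

lemma hasdesc: "gp T q \<Longrightarrow> q \<noteq> (1,1) \<Longrightarrow> \<exists>x. desc T x q"
proof (rule ccontr)
  assume g: "gp T q" and ne: "q \<noteq> (1,1)" and nd: "\<not> (\<exists>x. desc T x q)"
  obtain X Y where q: "q = (X,Y)" by (cases q)
  from nd have d: "\<not> desc T s1 q" "\<not> desc T s2 q" "\<not> desc T s3 q" by auto
  show False
  proof (cases T)
    case A2t
    have "X mod 3 \<noteq> 0" "Y mod 3 \<noteq> 0" "(X+Y) mod 3 \<noteq> 0" using g q A2t by (simp_all add: gp_def)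
    hence "X \<noteq> 0" "Y \<noteq> 0" "X + Y \<noteq> 3" by auto
    thus False using d ne q A2t by simp
  next
    case C2t
    have "X mod 4 \<noteq> 0" "Y mod 4 \<noteq> 0" "(2*X+Y) mod 4 \<noteq> 0" using g q C2t by (simp_all add: gp_def)
    hence "X \<noteq> 0" "Y \<noteq> 0" "2*X + Y \<noteq> 4" by auto
    thus False using d ne q C2t by simp
  next
    case G2t
    have "X mod 6 \<noteq> 0" "Y mod 6 \<noteq> 0" "(3*X+2*Y) mod 6 \<noteq> 0" using g q G2t by (simp_all add: gp_def)
    hence "X \<noteq> 0" "Y \<noteq> 0" "3*X + 2*Y \<noteq> 6" by auto
    thus False using d ne q G2t by simp
  qed
qed

fun alld :: "afftype \<Rightarrow> gen list \<Rightarrow> int \<times> int \<Rightarrow> bool" where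
  "alld T [] q = True"
| "alld T (x#xs) q = (desc T x q \<and> alld T xs (F T x q))"

fun alla :: "afftype \<Rightarrow> gen list \<Rightarrow> int \<times> int \<Rightarrow> bool" where
  "alla T [] q = True"
| "alla T (x#xs) q = (\<not> desc T x q \<and> alla T xs (F T x q))"

fun alt :: "gen \<Rightarrow> gen \<Rightarrow> nat \<Rightarrow> gen list" where
  "alt s t 0 = []"
| "alt s t (Suc n) = s # alt t s n"

lemma dihedral: "gp T q \<Longrightarrow> desc T s q \<Longrightarrow> desc T t q \<Longrightarrow> s \<noteq> t \<Longrightarrow> alld T (alt s t (cm T s t)) q"
  by (cases T; cases s; cases t; cases q) (simp_all add: numeral_eq_Suc)

lemma alld_L: "gp T q \<Longrightarrow> alld T xs q \<Longrightarrow> L T (fold (F T) xs q) = L T q - int (length xs) \<and> gp T (fold (F T) xs q)"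
proof (induction xs arbitrary: q)
  case Nil thus ?case by simp
next
  case (Cons x xs)
  hence "L T (F T x q) = L T q - 1" "gp T (F T x q)" "alld T xs (F T x q)" using LF gpF by auto
  with Cons.IH[of "F T x q"] show ?case by simp
qed

lemma alla_L: "gp T q \<Longrightarrow> alla T xs q \<Longrightarrow> L T (fold (F T) xs q) = L T q + int (length xs) \<and> gp T (fold (F T) xs q)"
proof (induction xs arbitrary: q)
  case Nil thus ?case by simp
next
  case (Cons x xs)
  hence "L T (F T x q) = L T q + 1" "gp T (F T x q)" "alla T xs (F T x q)" using LF gpF by auto
  with Cons.IH[of "F T x q"] show ?case by simp
qed


abbreviation p0 :: "int \<times> int" where "p0 \<equiv> (1,1)"

lemma ce_cong: "cox_eq T u v \<Longrightarrow> cox_eq T (a @ u @ b) (a @ v @ b)"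
proof (induction rule: cox_eq.induct)
  case (refl w) thus ?case by (rule cox_eq.refl)
next
  case (sym u v) thus ?case by (blast intro: cox_eq.sym)
next
  case (trans u v w) thus ?case by (blast intro: cox_eq.trans)
next
  case (rel u0 s t v0)
  have "cox_eq T ((a @ u0) @ concat (replicate (cm T s t) [s, t]) @ (v0 @ b)) ((a @ u0) @ (v0 @ b))"
    by (rule cox_eq.rel)
  thus ?case by simp
qed

lemma ce_Cons: "cox_eq T u v \<Longrightarrow> cox_eq T (x # u) (x # v)"
  using ce_cong[of T u v "[x]" "[]"] by simp

lemma ce_app: "cox_eq T u v \<Longrightarrow> cox_eq T (u @ b) (v @ b)"
  using ce_cong[of T u v "[]" b] by simp

lemma ce_cancel: "cox_eq T (x # x # w) w"
proof -
  have "cox_eq T ([] @ concat (replicate (cm T x x) [x, x]) @ w) ([] @ w)" by (rule cox_eq.rel)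
  thus ?thesis by simp
qed

lemma ce_revcancel: "cox_eq T (rev w @ w @ v) v"
proof (induction w arbitrary: v)
  case Nil thus ?case by (simp add: cox_eq.refl)
next
  case (Cons x w)
  have "cox_eq T (rev w @ (x # x # (w @ v)) @ []) (rev w @ (w @ v) @ [])"
    by (rule ce_cong, rule ce_cancel)
  hence "cox_eq T (rev (x # w) @ (x # w) @ v) (rev w @ w @ v)" by simp
  thus ?case using Cons.IH by (blast intro: cox_eq.trans)
qed

lemma repl_alt: "s \<noteq> t \<Longrightarrow> concat (replicate (cm T s t) [s,t]) = alt s t (cm T s t) @ rev (alt t s (cm T s t))"
  by (cases T; cases s; cases t) (simp_all add: numeral_eq_Suc)

lemma ce_braid: assumes "s \<noteq> t" shows "cox_eq T (alt s t (cm T s t)) (alt t s (cm T s t))"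
proof -
  let ?m = "cm T s t"
  have "cox_eq T ([] @ concat (replicate ?m [s, t]) @ alt t s ?m) ([] @ alt t s ?m)" by (rule cox_eq.rel)
  hence 1: "cox_eq T (alt s t ?m @ rev (alt t s ?m) @ alt t s ?m) (alt t s ?m)"
    using repl_alt[OF assms, of T] by simp
  have "cox_eq T (alt s t ?m @ (rev (alt t s ?m) @ alt t s ?m @ []) @ []) (alt s t ?m @ [] @ [])"
    by (rule ce_cong, rule ce_revcancel)
  hence 2: "cox_eq T (alt s t ?m @ rev (alt t s ?m) @ alt t s ?m) (alt s t ?m)" by simp
  show ?thesis using 1 2 by (blast intro: cox_eq.trans cox_eq.sym)
qed

lemma fw_resp: "cox_eq T u v \<Longrightarrow> fw T u q = fw T v q"
proof (induction arbitrary: q rule: cox_eq.induct)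
  case (rel u0 s t v0) thus ?case by (simp only: fw_simps(3) Frel)
qed auto

lemma fw_rev: "fw T w (fw T (rev w) q) = q"
  by (induction w arbitrary: q) auto

lemma fw_rev2: "fw T (rev w) (fw T w q) = q"
  using fw_rev[of T "rev w" q] by simp

lemma fold_fw: "fold (F T) xs q = fw T (rev xs) q"
  by (simp add: fw_def foldr_conv_fold)

lemma gp_fw: "gp T q \<Longrightarrow> gp T (fw T w q)"
  by (induction w) (auto intro: gpF)

lemma gp_fw0: "gp T (fw T w p0)"
  using gp_fw[OF gp0] .

lemma L_F_le: "gp T q \<Longrightarrow> L T (F T x q) \<le> L T q + 1"
  using LF[of T q x] by auto

lemma L_fw_le: "L T (fw T w p0) \<le> int (length w)"
proof (induction w)
  case Nil thus ?case by (simp add: L0)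
next
  case (Cons x w)
  thus ?case using L_F_le[OF gp_fw0, of T x w] by simp
qed

definition red :: "afftype \<Rightarrow> gen list \<Rightarrow> bool" where
  "red T w \<longleftrightarrow> L T (fw T w p0) = int (length w)"

lemma red_Cons: assumes "red T (x # w)" shows "red T w" and "desc T x (fw T (x # w) p0)"
proof -
  let ?q = "fw T w p0"
  have g: "gp T ?q" by (rule gp_fw0)
  have a: "L T (F T x ?q) = int (length w) + 1" using assms by (simp add: red_def)
  have b: "L T ?q \<le> int (length w)" by (rule L_fw_le)
  have c: "L T (F T x ?q) = (if desc T x ?q then L T ?q - 1 else L T ?q + 1)" by (rule LF[OF g])
  from a b c have d: "L T ?q = int (length w)" by (auto split: if_splits)
  thus "red T w" by (simp add: red_def)
  have "L T (F T x (F T x ?q)) = L T (F T x ?q) - 1" using d a by simp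
  moreover have "L T (F T x (F T x ?q)) = (if desc T x (F T x ?q) then L T (F T x ?q) - 1 else L T (F T x ?q) + 1)"
    by (rule LF, rule gpF[OF g])
  ultimately show "desc T x (fw T (x # w) p0)" by (auto split: if_splits)
qed

lemma ex_red: "gp T q \<Longrightarrow> \<exists>w. fw T w p0 = q \<and> red T w"
proof (induction "nat (L T q)" arbitrary: q rule: less_induct)
  case less
  show ?case
  proof (cases "q = p0")
    case True
    thus ?thesis by (intro exI[of _ "[]"]) (simp add: red_def L0)
  next
    case False
    then obtain x where d: "desc T x q" using hasdesc[OF less.prems] by blast
    let ?q' = "F T x q"
    have g': "gp T ?q'" using gpF[OF less.prems] .
    have l': "L T ?q' = L T q - 1" using LF[OF less.prems, of x] d by simp
    have "nat (L T ?q') < nat (L T q)" using l' Lnn[of T ?q'] by simp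
    then obtain w' where w': "fw T w' p0 = ?q'" "red T w'" using less.hyps g' by blast
    have "fw T (x # w') p0 = q" using w' by simp
    moreover have "red T (x # w')" using w' l' unfolding red_def by simp
    ultimately show ?thesis by blast
  qed
qed

lemma alt_Suc_pred: "0 < m \<Longrightarrow> alt s t m = s # alt t s (m - 1)"
  by (cases m) auto

lemma cm_pos: "0 < cm T s t"
  by (cases T; cases s; cases t) simp_all

lemma length_alt[simp]: "length (alt s t m) = m"
  by (induction m arbitrary: s t) auto

lemma M: "red T u \<Longrightarrow> red T v \<Longrightarrow> fw T u p0 = fw T v p0 \<Longrightarrow> cox_eq T u v"
proof (induction "length u" arbitrary: u v rule: less_induct)
  case less
  let ?q = "fw T u p0"
  have lu: "L T ?q = int (length u)" using less.prems(1) by (simp add: red_def)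
  have lv: "L T ?q = int (length v)" using less.prems(2,3) by (simp add: red_def)
  show ?case
  proof (cases u)
    case Nil
    hence "v = []" using lu lv by simp
    thus ?thesis using Nil by (simp add: cox_eq.refl)
  next
    case (Cons s u')
    then obtain t v' where v: "v = t # v'" using lu lv by (cases v) auto
    have ru': "red T u'" and ds: "desc T s ?q" using red_Cons less.prems(1) Cons by auto
    have rv': "red T v'" and dt: "desc T t ?q" using red_Cons less.prems(2) less.prems(3) v by auto
    have fu': "fw T u' p0 = F T s ?q" using Cons by simp
    have fv': "fw T v' p0 = F T t ?q" using v less.prems(3) by simp
    have lenv: "length v = length u" using lu lv by simp
    show ?thesis
    proof (cases "s = t")
      case True
      have ll: "length u' < length u" using Cons by simp
      have "cox_eq T u' v'" using less.hyps[OF ll ru' rv'] fu' fv' True by simp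
      thus ?thesis using Cons v True by (simp add: ce_Cons)
    next
      case False
      let ?m = "cm T s t"
      let ?as = "alt s t ?m" and ?at = "alt t s ?m"
      have g: "gp T ?q" by (rule gp_fw0)
      have ad: "alld T ?as ?q" by (rule dihedral[OF g ds dt False])
      let ?h = "fold (F T) ?as ?q"
      have lh: "L T ?h = L T ?q - int ?m" and gh: "gp T ?h" using alld_L[OF g ad] by auto
      obtain r where r: "fw T r p0 = ?h" "red T r" using ex_red[OF gh] by blast
      have lr: "int (length r) = L T ?q - int ?m" using r lh by (simp add: red_def)
      have h_eq: "?h = fw T (rev ?as) ?q" by (rule fold_fw)
      have fas: "fw T (?as @ r) p0 = ?q" using r h_eq fw_rev by simp
      have fat: "fw T (?at @ r) p0 = ?q"
      proof -
        have "fw T ?at ?h = fw T ?as ?h" using fw_resp[OF ce_braid[OF False]] by metis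
        thus ?thesis using fas r by simp
      qed
      have ras: "red T (?as @ r)" using fas lr lu by (simp add: red_def)
      have rat: "red T (?at @ r)" using fat lr lu by (simp add: red_def)
      have mpos: "0 < ?m" by (rule cm_pos)
      have as_c: "?as @ r = s # (alt t s (?m - 1) @ r)" using alt_Suc_pred[OF mpos] by simp
      have "cm T t s = ?m" by (cases T; cases s; cases t) simp_all
      hence at_c: "?at @ r = t # (alt s t (?m - 1) @ r)" using alt_Suc_pred[OF mpos, of t s] by simp
      have r1: "red T (alt t s (?m - 1) @ r)" using red_Cons(1)[of T s "alt t s (?m - 1) @ r"] ras as_c by simp
      have f1: "fw T (alt t s (?m - 1) @ r) p0 = F T s ?q"
        using fas as_c by (metis Finv fw_simps(2))
      have r2: "red T (alt s t (?m - 1) @ r)" using red_Cons(1)[of T t "alt s t (?m - 1) @ r"] rat at_c by simp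
      have f2: "fw T (alt s t (?m - 1) @ r) p0 = F T t ?q"
        using fat at_c by (metis Finv fw_simps(2))
      have ll1: "length u' < length u" using Cons by simp
      have ll2: "length v' < length u" using lenv v by simp
      have c1: "cox_eq T u' (alt t s (?m - 1) @ r)"
        using less.hyps[OF ll1 ru' r1] fu' f1 by simp
      have c2: "cox_eq T v' (alt s t (?m - 1) @ r)"
        using less.hyps[OF ll2 rv' r2] fv' f2 by simp
      have c3: "cox_eq T (?as @ r) (?at @ r)" by (rule ce_app, rule ce_braid[OF False])
      have "cox_eq T u (?as @ r)" using ce_Cons[OF c1, of s] Cons as_c by simp
      moreover have "cox_eq T v (?at @ r)" using ce_Cons[OF c2, of t] v at_c by simp
      ultimately show ?thesis using c3 by (blast intro: cox_eq.trans cox_eq.sym)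
    qed
  qed
qed

lemma to_red: "\<exists>r. red T r \<and> fw T r p0 = fw T w p0 \<and> cox_eq T w r"
proof (induction w)
  case Nil thus ?case by (intro exI[of _ "[]"]) (simp add: red_def L0 cox_eq.refl)
next
  case (Cons x w)
  then obtain r' where r': "red T r'" "fw T r' p0 = fw T w p0" "cox_eq T w r'" by blast
  let ?q' = "fw T w p0"
  have g: "gp T ?q'" by (rule gp_fw0)
  show ?case
  proof (cases "desc T x ?q'")
    case False
    hence "L T (F T x ?q') = L T ?q' + 1" using LF[OF g] by simp
    hence "red T (x # r')" using r' by (simp add: red_def)
    moreover have "cox_eq T (x # w) (x # r')" using ce_Cons[OF r'(3)] .
    ultimately show ?thesis using r' by auto
  next
    case True
    hence lq: "L T (F T x ?q') = L T ?q' - 1" using LF[OF g] by simp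
    obtain r'' where r'': "fw T r'' p0 = F T x ?q'" "red T r''" using ex_red[OF gpF[OF g]] by blast
    have "red T (x # r'')" using r'' lq r' by (simp add: red_def)
    moreover have "fw T (x # r'') p0 = fw T r' p0" using r'' r' by simp
    ultimately have "cox_eq T r' (x # r'')" using M r' by metis
    hence "cox_eq T (x # r') (x # x # r'')" by (rule ce_Cons)
    hence "cox_eq T (x # w) r''" using ce_Cons[OF r'(3), of x] ce_cancel[of T x r'']
      by (blast intro: cox_eq.trans)
    thus ?thesis using r'' by auto
  qed
qed

lemma ce_iff: "cox_eq T u v \<longleftrightarrow> fw T u p0 = fw T v p0"
proof
  assume "cox_eq T u v" thus "fw T u p0 = fw T v p0" by (rule fw_resp)
next
  assume e: "fw T u p0 = fw T v p0"
  obtain r1 where r1: "red T r1" "fw T r1 p0 = fw T u p0" "cox_eq T u r1" using to_red by blast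
  obtain r2 where r2: "red T r2" "fw T r2 p0 = fw T v p0" "cox_eq T v r2" using to_red by blast
  have "cox_eq T r1 r2" using M[OF r1(1) r2(1)] r1(2) r2(2) e by simp
  thus "cox_eq T u v" using r1(3) r2(3) by (blast intro: cox_eq.trans cox_eq.sym)
qed

lemma cls_eq_iff: "cls T u = cls T v \<longleftrightarrow> fw T u p0 = fw T v p0"
proof
  assume "cls T u = cls T v"
  hence "v \<in> cls T u" by (simp add: cls_def cox_eq.refl)
  thus "fw T u p0 = fw T v p0" by (simp add: cls_def ce_iff)
next
  assume "fw T u p0 = fw T v p0"
  thus "cls T u = cls T v" by (auto simp: cls_def ce_iff)
qed

lemma len_cls: "len T (cls T w) = nat (L T (fw T w p0))"
proof -
  obtain r where r: "red T r" "fw T r p0 = fw T w p0" "cox_eq T w r" using to_red by blast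
  show ?thesis unfolding len_def
  proof (rule Least_equality)
    show "\<exists>v\<in>cls T w. length v = nat (L T (fw T w p0))"
      using r by (intro bexI[of _ r]) (auto simp: red_def cls_def)
  next
    fix y assume "\<exists>v\<in>cls T w. length v = y"
    then obtain v where v: "cox_eq T w v" "length v = y" by (auto simp: cls_def)
    have "L T (fw T v p0) \<le> int (length v)" by (rule L_fw_le)
    moreover have "fw T v p0 = fw T w p0" using v(1) ce_iff by metis
    ultimately show "nat (L T (fw T w p0)) \<le> y" using v(2) by simp
  qed
qed

definition pcls :: "afftype \<Rightarrow> int \<times> int \<Rightarrow> gen list set" where
  "pcls T q = cls T (SOME w. fw T w p0 = q)"

lemma cls_pcls: "cls T w = pcls T (fw T w p0)"
proof -
  have "fw T (SOME v. fw T v p0 = fw T w p0) p0 = fw T w p0" by (rule someI[of _ w]) simp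
  thus ?thesis unfolding pcls_def using cls_eq_iff by metis
qed

lemma pcls_ex: "gp T q \<Longrightarrow> \<exists>w. q = fw T w p0"
  using ex_red by metis

lemma pcls_inj: "inj_on (pcls T) {q. gp T q}"
proof (rule inj_onI)
  fix q q' assume "q \<in> {q. gp T q}" "q' \<in> {q. gp T q}" and e: "pcls T q = pcls T q'"
  then obtain w w' where "q = fw T w p0" "q' = fw T w' p0" using pcls_ex by blast
  thus "q = q'" using e cls_pcls cls_eq_iff by metis
qed

lemma len_pcls: "gp T q \<Longrightarrow> len T (pcls T q) = nat (L T q)"
  using pcls_ex cls_pcls len_cls by metis





definition cser :: "'a set \<Rightarrow> ('a \<Rightarrow> nat) \<Rightarrow> real fps" where
  "cser D f = Abs_fps (\<lambda>n. of_nat (card {x\<in>D. f x = n}))"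

lemma cser_nth: "cser D f $ n = of_nat (card {x\<in>D. f x = n})"
  by (simp add: cser_def)

lemma gser_pcls: assumes "P \<subseteq> {q. gp T q}" shows "gser T (pcls T ` P) = cser P (\<lambda>q. nat (L T q))"
proof (rule fps_ext)
  fix n
  have inj: "inj_on (pcls T) {q\<in>P. nat (L T q) = n}"
    by (rule inj_on_subset[OF pcls_inj]) (use assms in auto)
  have "{x \<in> pcls T ` P. len T x = n} = pcls T ` {q\<in>P. nat (L T q) = n}"
    using assms len_pcls[of T] by auto
  hence "card {x \<in> pcls T ` P. len T x = n} = card {q\<in>P. nat (L T q) = n}"
    using card_image[OF inj] by simp
  thus "gser T (pcls T ` P) $ n = cser P (\<lambda>q. nat (L T q)) $ n"
    by (simp add: gser_def cser_def)
qed

lemma cser_bij: assumes "bij_betw h A B" "\<And>a. a \<in> A \<Longrightarrow> g (h a) = f a"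
  shows "cser A f = cser B g"
proof (rule fps_ext)
  fix n
  have "bij_betw h {a\<in>A. f a = n} {b\<in>B. g b = n}"
    using assms unfolding bij_betw_def inj_on_def by (auto simp: image_iff)
  hence "card {a\<in>A. f a = n} = card {b\<in>B. g b = n}" by (rule bij_betw_same_card)
  thus "cser A f $ n = cser B g $ n" by (simp add: cser_def)
qed

lemma cser_finite: assumes "finite D" shows "cser D f = (\<Sum>x\<in>D. fps_X ^ f x)"
proof (rule fps_ext)
  fix n
  have "(\<Sum>x\<in>D. fps_X ^ f x) $ n = (\<Sum>x\<in>D. (if n = f x then 1 else 0 :: real))"
    by (simp add: fps_sum_nth)
  also have "\<dots> = (\<Sum>x\<in>{x\<in>D. n = f x}. 1::real)"
    by (rule sum.inter_filter[OF assms, symmetric])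
  also have "(\<Sum>x\<in>{x\<in>D. n = f x}. 1::real) = (\<Sum>x\<in>{x\<in>D. f x = n}. 1)"
    by (rule sum.cong) auto
  also have "\<dots> = of_nat (card {x\<in>D. f x = n})" by simp
  finally show "cser D f $ n = (\<Sum>x\<in>D. fps_X ^ f x) $ n" by (simp add: cser_def)
qed

lemma cser_shift:
  fixes f :: "'a \<Rightarrow> nat"
  assumes fin: "\<And>n. finite {x\<in>D. f x \<le> n}" and k: "0 < k"
  shows "cser (D \<times> UNIV) (\<lambda>(x,i). f x + k*i) * (1 - fps_X^k) = cser D f"
proof (rule fps_ext)
  fix n
  define S where "S m = {p\<in>D \<times> UNIV. (case p of (x,i) \<Rightarrow> f x + k*i) = m}" for m
  have finS: "finite (S m)" for m
  proof -
    have "S m \<subseteq> {x\<in>D. f x \<le> m} \<times> {..m}"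
    proof
      fix p assume "p \<in> S m"
      then obtain x i where p: "p = (x,i)" "x \<in> D" "f x + k*i = m" by (auto simp: S_def)
      have "i \<le> k*i" using k by simp
      hence "i \<le> m" using p(3) by linarith
      thus "p \<in> {x\<in>D. f x \<le> m} \<times> {..m}" using p by auto
    qed
    thus ?thesis using fin by (rule finite_subset[OF _ finite_cartesian_product]) auto
  qed
  have split: "card (S n) = card {x\<in>D. f x = n} + (if n < k then 0 else card (S (n - k)))"
  proof -
    let ?A = "(\<lambda>x. (x, 0::nat)) ` {x\<in>D. f x = n}"
    let ?B = "(\<lambda>(x,i). (x, Suc i)) ` (if n < k then {} else S (n - k))"
    have eq: "S n = ?A \<union> ?B"
    proof (intro set_eqI iffI)
      fix p assume "p \<in> S n"
      then obtain x i where p: "p = (x,i)" "x \<in> D" "f x + k*i = n" by (auto simp: S_def)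
      show "p \<in> ?A \<union> ?B"
      proof (cases i)
        case 0 thus ?thesis using p by auto
      next
        case (Suc j)
        hence "k \<le> n" "f x + k*j = n - k" using p by auto
        thus ?thesis using p Suc by (auto simp: S_def image_iff)
      qed
    next
      fix p assume "p \<in> ?A \<union> ?B"
      thus "p \<in> S n"
      proof
        assume "p \<in> ?A" thus ?thesis by (auto simp: S_def)
      next
        assume "p \<in> ?B"
        then obtain x j where "p = (x, Suc j)" "\<not> n < k" "x \<in> D" "f x + k*j = n - k"
          by (auto simp: S_def split: if_splits)
        thus ?thesis by (auto simp: S_def)
      qed
    qed
    have disj: "?A \<inter> ?B = {}" by auto
    have fA: "finite ?A"
      by (rule finite_imageI, rule finite_subset[OF _ fin[of n]]) auto
    have fB: "finite ?B" using finS by auto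
    have cA: "card ?A = card {x\<in>D. f x = n}" by (rule card_image) (auto simp: inj_on_def)
    have cB: "card ?B = (if n < k then 0 else card (S (n - k)))"
      by (subst card_image) (auto simp: inj_on_def)
    show ?thesis unfolding eq using card_Un_disjoint[OF fA fB disj] cA cB by simp
  qed
  have c: "cser (D \<times> UNIV) (\<lambda>(x,i). f x + k*i) $ m = of_nat (card (S m))" for m
    by (simp add: cser_def S_def)
  have "(cser (D \<times> UNIV) (\<lambda>(x,i). f x + k*i) * (1 - fps_X^k)) $ n
      = cser (D \<times> UNIV) (\<lambda>(x,i). f x + k*i) $ n - (cser (D \<times> UNIV) (\<lambda>(x,i). f x + k*i) * fps_X^k) $ n"
    by (simp add: algebra_simps)
  also have "\<dots> = of_nat (card {x\<in>D. f x = n})"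
    using split by (simp add: fps_X_power_mult_right_nth c)
  finally show "(cser (D \<times> UNIV) (\<lambda>(x,i). f x + k*i) * (1 - fps_X^k)) $ n = cser D f $ n"
    by (simp add: cser_def)
qed





definition dm :: "int \<times> int \<Rightarrow> bool" where "dm q = (0 < fst q \<and> 0 < snd q)"

lemma meq: "a = k*n + v \<Longrightarrow> (0::int) < n \<Longrightarrow> a mod n = v mod n"
  by simp

fun W0 :: "afftype \<Rightarrow> gen list list" where
"W0 A2t = [[], [s1], [s1, s2], [s1, s2, s1], [s2], [s2, s1]]"
| "W0 C2t = [[], [s1], [s1, s2], [s1, s2, s1], [s1, s2, s1, s2], [s2], [s2, s1], [s2, s1, s2]]"
| "W0 G2t = [[], [s1], [s1, s2], [s1, s2, s1], [s1, s2, s1, s2], [s1, s2, s1, s2, s1], [s1, s2, s1, s2, s1, s2], [s2], [s2, s1], [s2, s1, s2], [s2, s1, s2, s1], [s2, s1, s2, s1, s2]]"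

fun R :: "afftype \<Rightarrow> (int \<times> int) list" where
"R A2t = [(1,1), (2,2)]"
| "R C2t = [(1,1), (2,1), (2,3), (3,3)]"
| "R G2t = [(1,1), (1,2), (2,1), (2,5), (3,1), (3,2), (3,4), (3,5), (4,1), (4,5), (5,4), (5,5)]"

fun cA :: "afftype \<Rightarrow> nat" where
"cA A2t = 2"
| "cA C2t = 4"
| "cA G2t = 10"

fun cB :: "afftype \<Rightarrow> nat" where
"cB A2t = 2"
| "cB C2t = 3"
| "cB G2t = 6"

lemma exist_A2t: assumes g: "gp A2t (X,Y)" shows "\<exists>wd\<in>set (W0 A2t). dm (fw A2t (rev wd) (X,Y))"
proof -
  have nz: "X \<noteq> 0" "Y \<noteq> 0" "X + Y \<noteq> 0" using g by (auto simp: gp_def)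
  show ?thesis
  proof (cases "0 < X")
    case c0: True
    show ?thesis
    proof (cases "0 < Y")
      case c1: True
      show ?thesis by (rule bexI[where x="[]"]) (use c0 c1 nz in \<open>simp_all add: dm_def\<close>)
    next
      case c1: False
      show ?thesis
      proof (cases "0 < X + Y")
        case c2: True
        show ?thesis by (rule bexI[where x="[s2]"]) (use c0 c1 c2 nz in \<open>simp_all add: dm_def\<close>)
      next
        case c2: False
        show ?thesis by (rule bexI[where x="[s2, s1]"]) (use c0 c1 c2 nz in \<open>simp_all add: dm_def\<close>)
      qed
    qed
  next
    case c0: False
    show ?thesis
    proof (cases "0 < Y")
      case c1: True
      show ?thesis
      proof (cases "0 < X + Y")
        case c2: True
        show ?thesis by (rule bexI[where x="[s1]"]) (use c0 c1 c2 nz in \<open>simp_all add: dm_def\<close>)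
      next
        case c2: False
        show ?thesis by (rule bexI[where x="[s1, s2]"]) (use c0 c1 c2 nz in \<open>simp_all add: dm_def\<close>)
      qed
    next
      case c1: False
      show ?thesis by (rule bexI[where x="[s1, s2, s1]"]) (use c0 c1 nz in \<open>simp_all add: dm_def\<close>)
    qed
  qed
qed

lemma Lshift_A2t: assumes hx: "0 < x" and hy: "0 < y" and hi: "0 \<le> i" and hj: "0 \<le> j"
  shows "L A2t (3 * i + x, 3 * j + y) = 2 * i + 2 * j + L A2t (x, y)"
proof -
  have e0: "(3 * i + x) div 3 = (i) + (x) div 3" by (rule dpos[where k="i"]; simp add: algebra_simps)
  have e1: "(3 * j + y) div 3 = (j) + (y) div 3" by (rule dpos[where k="j"]; simp add: algebra_simps)
  have e2: "((3 * i + x) + (3 * j + y)) div 3 = (i + j) + (x + y) div 3" by (rule dpos[where k="i + j"]; simp add: algebra_simps)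
  have n0: "0 \<le> (x) div 3" using hx hy by simp
  have n1: "0 \<le> (y) div 3" using hx hy by simp
  have n2: "0 \<le> (x + y) div 3" using hx hy by simp
  have a0: "\<bar>(i) + (x) div 3\<bar> = (i) + (x) div 3" by (rule abs_of_nonneg, rule add_nonneg_nonneg, use hi hj in simp, rule n0)
  have b0: "\<bar>(x) div 3\<bar> = (x) div 3" by (rule abs_of_nonneg, rule n0)
  have a1: "\<bar>(j) + (y) div 3\<bar> = (j) + (y) div 3" by (rule abs_of_nonneg, rule add_nonneg_nonneg, use hi hj in simp, rule n1)
  have b1: "\<bar>(y) div 3\<bar> = (y) div 3" by (rule abs_of_nonneg, rule n1)
  have a2: "\<bar>(i + j) + (x + y) div 3\<bar> = (i + j) + (x + y) div 3" by (rule abs_of_nonneg, rule add_nonneg_nonneg, use hi hj in simp, rule n2)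
  have b2: "\<bar>(x + y) div 3\<bar> = (x + y) div 3" by (rule abs_of_nonneg, rule n2)
  show ?thesis unfolding L_def NN.simps forms.simps list.map sum_list_simps e0 e1 e2 a0 b0 a1 b1 a2 b2
    by (simp add: algebra_simps)
qed

lemma gpshift_A2t: "gp A2t (3 * i + x, 3 * j + y) \<longleftrightarrow> gp A2t (x, y)"
proof -
  have e0: "(3 * i + x) mod 3 = (x) mod 3" by (rule meq[where k="i"]; simp add: algebra_simps)
  have e1: "(3 * j + y) mod 3 = (y) mod 3" by (rule meq[where k="j"]; simp add: algebra_simps)
  have e2: "((3 * i + x) + (3 * j + y)) mod 3 = (x + y) mod 3" by (rule meq[where k="i + j"]; simp add: algebra_simps)
  show ?thesis unfolding gp_def NN.simps forms.simps list.set ball_simps e0 e1 e2 ..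
qed

lemma res_A2t: assumes "gp A2t (x,y)" "0 \<le> x" "x < 3" "0 \<le> y" "y < 3" shows "(x,y) \<in> set (R A2t)"
proof -
  have "x = 0 \<or> x = 1 \<or> x = 2" using assms(2-5) by presburger
  moreover have "y = 0 \<or> y = 1 \<or> y = 2" using assms(2-5) by presburger
  ultimately show ?thesis using assms(1) by (elim disjE) (simp_all add: gp_def)
qed

lemma exist_C2t: assumes g: "gp C2t (X,Y)" shows "\<exists>wd\<in>set (W0 C2t). dm (fw C2t (rev wd) (X,Y))"
proof -
  have nz: "X \<noteq> 0" "Y \<noteq> 0" "X + Y \<noteq> 0" "2*X + Y \<noteq> 0" using g by (auto simp: gp_def)
  show ?thesis
  proof (cases "0 < X")
    case c0: True
    show ?thesis
    proof (cases "0 < Y")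
      case c1: True
      show ?thesis by (rule bexI[where x="[]"]) (use c0 c1 nz in \<open>simp_all add: dm_def\<close>)
    next
      case c1: False
      show ?thesis
      proof (cases "0 < X + Y")
        case c2: True
        show ?thesis by (rule bexI[where x="[s2]"]) (use c0 c1 c2 nz in \<open>simp_all add: dm_def\<close>)
      next
        case c2: False
        show ?thesis
        proof (cases "0 < 2*X + Y")
          case c3: True
          show ?thesis by (rule bexI[where x="[s2, s1]"]) (use c0 c1 c2 c3 nz in \<open>simp_all add: dm_def\<close>)
        next
          case c3: False
          show ?thesis by (rule bexI[where x="[s2, s1, s2]"]) (use c0 c1 c2 c3 nz in \<open>simp_all add: dm_def\<close>)
        qed
      qed
    qed
  next
    case c0: False
    show ?thesis
    proof (cases "0 < Y")
      case c1: True
      show ?thesis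
      proof (cases "0 < X + Y")
        case c2: True
        show ?thesis
        proof (cases "0 < 2*X + Y")
          case c3: True
          show ?thesis by (rule bexI[where x="[s1]"]) (use c0 c1 c2 c3 nz in \<open>simp_all add: dm_def\<close>)
        next
          case c3: False
          show ?thesis by (rule bexI[where x="[s1, s2]"]) (use c0 c1 c2 c3 nz in \<open>simp_all add: dm_def\<close>)
        qed
      next
        case c2: False
        show ?thesis by (rule bexI[where x="[s1, s2, s1]"]) (use c0 c1 c2 nz in \<open>simp_all add: dm_def\<close>)
      qed
    next
      case c1: False
      show ?thesis by (rule bexI[where x="[s1, s2, s1, s2]"]) (use c0 c1 nz in \<open>simp_all add: dm_def\<close>)
    qed
  qed
qed

lemma Lshift_C2t: assumes hx: "0 < x" and hy: "0 < y" and hi: "0 \<le> i" and hj: "0 \<le> j"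
  shows "L C2t (4 * i + x, 4 * j + y) = 4 * i + 3 * j + L C2t (x, y)"
proof -
  have e0: "(4 * i + x) div 4 = (i) + (x) div 4" by (rule dpos[where k="i"]; simp add: algebra_simps)
  have e1: "(4 * j + y) div 4 = (j) + (y) div 4" by (rule dpos[where k="j"]; simp add: algebra_simps)
  have e2: "((4 * i + x) + (4 * j + y)) div 4 = (i + j) + (x + y) div 4" by (rule dpos[where k="i + j"]; simp add: algebra_simps)
  have e3: "(2 * ((4 * i + x)) + (4 * j + y)) div 4 = (2*i + j) + (2*x + y) div 4" by (rule dpos[where k="2*i + j"]; simp add: algebra_simps)
  have n0: "0 \<le> (x) div 4" using hx hy by simp
  have n1: "0 \<le> (y) div 4" using hx hy by simp
  have n2: "0 \<le> (x + y) div 4" using hx hy by simp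
  have n3: "0 \<le> (2*x + y) div 4" using hx hy by simp
  have a0: "\<bar>(i) + (x) div 4\<bar> = (i) + (x) div 4" by (rule abs_of_nonneg, rule add_nonneg_nonneg, use hi hj in simp, rule n0)
  have b0: "\<bar>(x) div 4\<bar> = (x) div 4" by (rule abs_of_nonneg, rule n0)
  have a1: "\<bar>(j) + (y) div 4\<bar> = (j) + (y) div 4" by (rule abs_of_nonneg, rule add_nonneg_nonneg, use hi hj in simp, rule n1)
  have b1: "\<bar>(y) div 4\<bar> = (y) div 4" by (rule abs_of_nonneg, rule n1)
  have a2: "\<bar>(i + j) + (x + y) div 4\<bar> = (i + j) + (x + y) div 4" by (rule abs_of_nonneg, rule add_nonneg_nonneg, use hi hj in simp, rule n2)
  have b2: "\<bar>(x + y) div 4\<bar> = (x + y) div 4" by (rule abs_of_nonneg, rule n2)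
  have a3: "\<bar>(2*i + j) + (2*x + y) div 4\<bar> = (2*i + j) + (2*x + y) div 4" by (rule abs_of_nonneg, rule add_nonneg_nonneg, use hi hj in simp, rule n3)
  have b3: "\<bar>(2*x + y) div 4\<bar> = (2*x + y) div 4" by (rule abs_of_nonneg, rule n3)
  show ?thesis unfolding L_def NN.simps forms.simps list.map sum_list_simps e0 e1 e2 e3 a0 b0 a1 b1 a2 b2 a3 b3
    by (simp add: algebra_simps)
qed

lemma gpshift_C2t: "gp C2t (4 * i + x, 4 * j + y) \<longleftrightarrow> gp C2t (x, y)"
proof -
  have e0: "(4 * i + x) mod 4 = (x) mod 4" by (rule meq[where k="i"]; simp add: algebra_simps)
  have e1: "(4 * j + y) mod 4 = (y) mod 4" by (rule meq[where k="j"]; simp add: algebra_simps)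
  have e2: "((4 * i + x) + (4 * j + y)) mod 4 = (x + y) mod 4" by (rule meq[where k="i + j"]; simp add: algebra_simps)
  have e3: "(2 * ((4 * i + x)) + (4 * j + y)) mod 4 = (2*x + y) mod 4" by (rule meq[where k="2*i + j"]; simp add: algebra_simps)
  show ?thesis unfolding gp_def NN.simps forms.simps list.set ball_simps e0 e1 e2 e3 ..
qed

lemma res_C2t: assumes "gp C2t (x,y)" "0 \<le> x" "x < 4" "0 \<le> y" "y < 4" shows "(x,y) \<in> set (R C2t)"
proof -
  have "x = 0 \<or> x = 1 \<or> x = 2 \<or> x = 3" using assms(2-5) by presburger
  moreover have "y = 0 \<or> y = 1 \<or> y = 2 \<or> y = 3" using assms(2-5) by presburger
  ultimately show ?thesis using assms(1) by (elim disjE) (simp_all add: gp_def)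
qed

lemma exist_G2t: assumes g: "gp G2t (X,Y)" shows "\<exists>wd\<in>set (W0 G2t). dm (fw G2t (rev wd) (X,Y))"
proof -
  have nz: "X \<noteq> 0" "Y \<noteq> 0" "X + Y \<noteq> 0" "2*X + Y \<noteq> 0" "3*X + Y \<noteq> 0" "3*X + 2*Y \<noteq> 0" using g by (auto simp: gp_def)
  show ?thesis
  proof (cases "0 < X")
    case c0: True
    show ?thesis
    proof (cases "0 < Y")
      case c1: True
      show ?thesis by (rule bexI[where x="[]"]) (use c0 c1 nz in \<open>simp_all add: dm_def\<close>)
    next
      case c1: False
      show ?thesis
      proof (cases "0 < X + Y")
        case c2: True
        show ?thesis by (rule bexI[where x="[s1]"]) (use c0 c1 c2 nz in \<open>simp_all add: dm_def\<close>)
      next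
        case c2: False
        show ?thesis
        proof (cases "0 < 2*X + Y")
          case c3: True
          show ?thesis
          proof (cases "0 < 3*X + Y")
            case c4: True
            show ?thesis
            proof (cases "0 < 3*X + 2*Y")
              case c5: True
              show ?thesis by (rule bexI[where x="[s1, s2]"]) (use c0 c1 c2 c3 c4 c5 nz in \<open>simp_all add: dm_def\<close>)
            next
              case c5: False
              show ?thesis by (rule bexI[where x="[s1, s2, s1]"]) (use c0 c1 c2 c3 c4 c5 nz in \<open>simp_all add: dm_def\<close>)
            qed
          next
            case c4: False
            show ?thesis by (rule FalseE) (use c0 c1 c2 c3 c4 nz in linarith)
          qed
        next
          case c3: False
          show ?thesis
          proof (cases "0 < 3*X + Y")
            case c4: True
            show ?thesis by (rule bexI[where x="[s1, s2, s1, s2]"]) (use c0 c1 c2 c3 c4 nz in \<open>simp_all add: dm_def\<close>)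
          next
            case c4: False
            show ?thesis by (rule bexI[where x="[s1, s2, s1, s2, s1]"]) (use c0 c1 c2 c3 c4 nz in \<open>simp_all add: dm_def\<close>)
          qed
        qed
      qed
    qed
  next
    case c0: False
    show ?thesis
    proof (cases "0 < Y")
      case c1: True
      show ?thesis
      proof (cases "0 < X + Y")
        case c2: True
        show ?thesis
        proof (cases "0 < 2*X + Y")
          case c3: True
          show ?thesis
          proof (cases "0 < 3*X + Y")
            case c4: True
            show ?thesis by (rule bexI[where x="[s2]"]) (use c0 c1 c2 c3 c4 nz in \<open>simp_all add: dm_def\<close>)
          next
            case c4: False
            show ?thesis by (rule bexI[where x="[s2, s1]"]) (use c0 c1 c2 c3 c4 nz in \<open>simp_all add: dm_def\<close>)
          qed
        next
          case c3: False
          show ?thesis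
          proof (cases "0 < 3*X + Y")
            case c4: True
            show ?thesis by (rule FalseE) (use c0 c1 c2 c3 c4 nz in linarith)
          next
            case c4: False
            show ?thesis
            proof (cases "0 < 3*X + 2*Y")
              case c5: True
              show ?thesis by (rule bexI[where x="[s2, s1, s2]"]) (use c0 c1 c2 c3 c4 c5 nz in \<open>simp_all add: dm_def\<close>)
            next
              case c5: False
              show ?thesis by (rule bexI[where x="[s2, s1, s2, s1]"]) (use c0 c1 c2 c3 c4 c5 nz in \<open>simp_all add: dm_def\<close>)
            qed
          qed
        qed
      next
        case c2: False
        show ?thesis by (rule bexI[where x="[s2, s1, s2, s1, s2]"]) (use c0 c1 c2 nz in \<open>simp_all add: dm_def\<close>)
      qed
    next
      case c1: False
      show ?thesis by (rule bexI[where x="[s1, s2, s1, s2, s1, s2]"]) (use c0 c1 nz in \<open>simp_all add: dm_def\<close>)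
    qed
  qed
qed

lemma Lshift_G2t: assumes hx: "0 < x" and hy: "0 < y" and hi: "0 \<le> i" and hj: "0 \<le> j"
  shows "L G2t (6 * i + x, 6 * j + y) = 10 * i + 6 * j + L G2t (x, y)"
proof -
  have e0: "(6 * i + x) div 6 = (i) + (x) div 6" by (rule dpos[where k="i"]; simp add: algebra_simps)
  have e1: "(6 * j + y) div 6 = (j) + (y) div 6" by (rule dpos[where k="j"]; simp add: algebra_simps)
  have e2: "((6 * i + x) + (6 * j + y)) div 6 = (i + j) + (x + y) div 6" by (rule dpos[where k="i + j"]; simp add: algebra_simps)
  have e3: "(2 * ((6 * i + x)) + (6 * j + y)) div 6 = (2*i + j) + (2*x + y) div 6" by (rule dpos[where k="2*i + j"]; simp add: algebra_simps)
  have e4: "(3 * ((6 * i + x)) + (6 * j + y)) div 6 = (3*i + j) + (3*x + y) div 6" by (rule dpos[where k="3*i + j"]; simp add: algebra_simps)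
  have e5: "(3 * ((6 * i + x)) + 2 * ((6 * j + y))) div 6 = (3*i + 2*j) + (3*x + 2*y) div 6" by (rule dpos[where k="3*i + 2*j"]; simp add: algebra_simps)
  have n0: "0 \<le> (x) div 6" using hx hy by simp
  have n1: "0 \<le> (y) div 6" using hx hy by simp
  have n2: "0 \<le> (x + y) div 6" using hx hy by simp
  have n3: "0 \<le> (2*x + y) div 6" using hx hy by simp
  have n4: "0 \<le> (3*x + y) div 6" using hx hy by simp
  have n5: "0 \<le> (3*x + 2*y) div 6" using hx hy by simp
  have a0: "\<bar>(i) + (x) div 6\<bar> = (i) + (x) div 6" by (rule abs_of_nonneg, rule add_nonneg_nonneg, use hi hj in simp, rule n0)
  have b0: "\<bar>(x) div 6\<bar> = (x) div 6" by (rule abs_of_nonneg, rule n0)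
  have a1: "\<bar>(j) + (y) div 6\<bar> = (j) + (y) div 6" by (rule abs_of_nonneg, rule add_nonneg_nonneg, use hi hj in simp, rule n1)
  have b1: "\<bar>(y) div 6\<bar> = (y) div 6" by (rule abs_of_nonneg, rule n1)
  have a2: "\<bar>(i + j) + (x + y) div 6\<bar> = (i + j) + (x + y) div 6" by (rule abs_of_nonneg, rule add_nonneg_nonneg, use hi hj in simp, rule n2)
  have b2: "\<bar>(x + y) div 6\<bar> = (x + y) div 6" by (rule abs_of_nonneg, rule n2)
  have a3: "\<bar>(2*i + j) + (2*x + y) div 6\<bar> = (2*i + j) + (2*x + y) div 6" by (rule abs_of_nonneg, rule add_nonneg_nonneg, use hi hj in simp, rule n3)
  have b3: "\<bar>(2*x + y) div 6\<bar> = (2*x + y) div 6" by (rule abs_of_nonneg, rule n3)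
  have a4: "\<bar>(3*i + j) + (3*x + y) div 6\<bar> = (3*i + j) + (3*x + y) div 6" by (rule abs_of_nonneg, rule add_nonneg_nonneg, use hi hj in simp, rule n4)
  have b4: "\<bar>(3*x + y) div 6\<bar> = (3*x + y) div 6" by (rule abs_of_nonneg, rule n4)
  have a5: "\<bar>(3*i + 2*j) + (3*x + 2*y) div 6\<bar> = (3*i + 2*j) + (3*x + 2*y) div 6" by (rule abs_of_nonneg, rule add_nonneg_nonneg, use hi hj in simp, rule n5)
  have b5: "\<bar>(3*x + 2*y) div 6\<bar> = (3*x + 2*y) div 6" by (rule abs_of_nonneg, rule n5)
  show ?thesis unfolding L_def NN.simps forms.simps list.map sum_list_simps e0 e1 e2 e3 e4 e5 a0 b0 a1 b1 a2 b2 a3 b3 a4 b4 a5 b5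
    by (simp add: algebra_simps)
qed

lemma gpshift_G2t: "gp G2t (6 * i + x, 6 * j + y) \<longleftrightarrow> gp G2t (x, y)"
proof -
  have e0: "(6 * i + x) mod 6 = (x) mod 6" by (rule meq[where k="i"]; simp add: algebra_simps)
  have e1: "(6 * j + y) mod 6 = (y) mod 6" by (rule meq[where k="j"]; simp add: algebra_simps)
  have e2: "((6 * i + x) + (6 * j + y)) mod 6 = (x + y) mod 6" by (rule meq[where k="i + j"]; simp add: algebra_simps)
  have e3: "(2 * ((6 * i + x)) + (6 * j + y)) mod 6 = (2*x + y) mod 6" by (rule meq[where k="2*i + j"]; simp add: algebra_simps)
  have e4: "(3 * ((6 * i + x)) + (6 * j + y)) mod 6 = (3*x + y) mod 6" by (rule meq[where k="3*i + j"]; simp add: algebra_simps)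
  have e5: "(3 * ((6 * i + x)) + 2 * ((6 * j + y))) mod 6 = (3*x + 2*y) mod 6" by (rule meq[where k="3*i + 2*j"]; simp add: algebra_simps)
  show ?thesis unfolding gp_def NN.simps forms.simps list.set ball_simps e0 e1 e2 e3 e4 e5 ..
qed

lemma res_G2t: assumes "gp G2t (x,y)" "0 \<le> x" "x < 6" "0 \<le> y" "y < 6" shows "(x,y) \<in> set (R G2t)"
proof -
  have "x = 0 \<or> x = 1 \<or> x = 2 \<or> x = 3 \<or> x = 4 \<or> x = 5" using assms(2-5) by presburger
  moreover have "y = 0 \<or> y = 1 \<or> y = 2 \<or> y = 3 \<or> y = 4 \<or> y = 5" using assms(2-5) by presburger
  ultimately show ?thesis using assms(1) by (elim disjE) (simp_all add: gp_def)
qed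


lemma asc: "wd \<in> set (W0 T) \<Longrightarrow> 0 < X \<Longrightarrow> 0 < Y \<Longrightarrow> alla T (rev wd) (X,Y)"
  by (cases T) auto

lemma uniq: "wd \<in> set (W0 T) \<Longrightarrow> wd' \<in> set (W0 T) \<Longrightarrow> 0 < X \<Longrightarrow> 0 < Y \<Longrightarrow> dm (fw T (rev wd') (fw T wd (X,Y))) \<Longrightarrow> wd' = wd"
  by (cases T) (auto simp: dm_def)





declare W0.simps[simp del] R.simps[simp del]

lemma NN_pos: "0 < NN T" by (cases T) simp_all

lemma exist: assumes "gp T q" shows "\<exists>wd\<in>set (W0 T). dm (fw T (rev wd) q)"
proof -
  obtain X Y where q: "q = (X,Y)" by (cases q)
  show ?thesis using assms unfolding q by (cases T) (simp_all only: exist_A2t exist_C2t exist_G2t)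
qed

lemma Lshift: "0 < x \<Longrightarrow> 0 < y \<Longrightarrow> 0 \<le> i \<Longrightarrow> 0 \<le> j \<Longrightarrow>
  L T (NN T * i + x, NN T * j + y) = int (cA T) * i + int (cB T) * j + L T (x,y)"
  by (cases T) (simp_all add: Lshift_A2t Lshift_C2t Lshift_G2t)

lemma gpshift: "gp T (NN T * i + x, NN T * j + y) \<longleftrightarrow> gp T (x,y)"
  by (cases T) (simp_all only: NN.simps gpshift_A2t gpshift_C2t gpshift_G2t)

lemma res: "gp T (x,y) \<Longrightarrow> 0 \<le> x \<Longrightarrow> x < NN T \<Longrightarrow> 0 \<le> y \<Longrightarrow> y < NN T \<Longrightarrow> (x,y) \<in> set (R T)"
  by (cases T) (simp_all only: res_A2t res_C2t res_G2t NN.simps)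

lemma Rbounds: "r \<in> set (R T) \<Longrightarrow> 0 < fst r \<and> fst r < NN T \<and> 0 < snd r \<and> snd r < NN T \<and> gp T r"
  by (cases T) (auto simp: gp_def R.simps)

definition Elist :: "afftype \<Rightarrow> (gen list \<times> (int \<times> int)) list" where
  "Elist T = concat (map (\<lambda>wd. map (\<lambda>r. (wd, r)) (R T)) (W0 T))"

lemma Elist_mem: "e \<in> set (Elist T) \<longleftrightarrow> fst e \<in> set (W0 T) \<and> snd e \<in> set (R T)"
  by (cases e) (auto simp: Elist_def)

definition cE :: "afftype \<Rightarrow> gen list \<times> (int \<times> int) \<Rightarrow> nat" where
  "cE T e = length (fst e) + nat (L T (snd e))"

definition Phi :: "afftype \<Rightarrow> ((gen list \<times> (int \<times> int)) \<times> nat) \<times> nat \<Rightarrow> int \<times> int" where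
  "Phi T a = fw T (fst (fst (fst a)))
      (NN T * int (snd (fst a)) + fst (snd (fst (fst a))), NN T * int (snd a) + snd (snd (fst (fst a))))"

definition ch :: "afftype \<Rightarrow> int \<times> int \<Rightarrow> gen list" where
  "ch T q = (case find (\<lambda>wd. dm (fw T (rev wd) q)) (W0 T) of Some wd \<Rightarrow> wd | None \<Rightarrow> [])"

definition Psi :: "afftype \<Rightarrow> int \<times> int \<Rightarrow> ((gen list \<times> (int \<times> int)) \<times> nat) \<times> nat" where
  "Psi T q = (let wd = ch T q; q' = fw T (rev wd) q in
     (((wd, (fst q' mod NN T, snd q' mod NN T)), nat (fst q' div NN T)), nat (snd q' div NN T)))"

lemma find_prop: "find P xs = Some x \<Longrightarrow> x \<in> set xs \<and> P x"
  by (auto simp: find_Some_iff)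

lemma ch_prop: assumes "gp T q" shows "ch T q \<in> set (W0 T) \<and> dm (fw T (rev (ch T q)) q)"
proof -
  have "find (\<lambda>wd. dm (fw T (rev wd) q)) (W0 T) \<noteq> None"
    using exist[OF assms] by (auto simp: find_None_iff)
  then obtain wd where f: "find (\<lambda>wd. dm (fw T (rev wd) q)) (W0 T) = Some wd" by blast
  thus ?thesis using find_prop[OF f] by (simp add: ch_def)
qed

lemma ch_unique: assumes "wd \<in> set (W0 T)" "0 < X" "0 < Y"
  shows "ch T (fw T wd (X,Y)) = wd"
proof -
  let ?q = "fw T wd (X,Y)"
  have "dm (fw T (rev wd) ?q)" using assms fw_rev2[of T wd "(X,Y)"] by (simp add: dm_def)
  hence "find (\<lambda>wd. dm (fw T (rev wd) ?q)) (W0 T) \<noteq> None"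
    using assms(1) by (auto simp: find_None_iff)
  then obtain wd' where f: "find (\<lambda>wd. dm (fw T (rev wd) ?q)) (W0 T) = Some wd'" by blast
  have "wd' \<in> set (W0 T)" "dm (fw T (rev wd') ?q)" using find_prop[OF f] by auto
  hence "wd' = wd" using uniq assms by blast
  thus ?thesis using f by (simp add: ch_def)
qed

abbreviation Dom :: "afftype \<Rightarrow> (((gen list \<times> (int \<times> int)) \<times> nat) \<times> nat) set" where
  "Dom T \<equiv> (set (Elist T) \<times> UNIV) \<times> UNIV"

lemma Phi_props: assumes a: "a \<in> Dom T"
  shows "gp T (Phi T a)" "L T (Phi T a) = int (cE T (fst (fst a)) + cA T * snd (fst a) + cB T * snd a)"
    "Psi T (Phi T a) = a"
proof -
  obtain wd x y i j where a': "a = (((wd,(x,y)),i),j)" by (metis prod.collapse)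
  have wd: "wd \<in> set (W0 T)" and r: "(x,y) \<in> set (R T)" using a a' by (auto simp: Elist_mem)
  have b: "0 < x" "x < NN T" "0 < y" "y < NN T" "gp T (x,y)" using Rbounds[OF r] by auto
  let ?q' = "(NN T * int i + x, NN T * int j + y)"
  have ph: "Phi T a = fw T wd ?q'" by (simp add: Phi_def a')
  have g': "gp T ?q'" using gpshift b(5) by blast
  thus "gp T (Phi T a)" using ph gp_fw by simp
  have pos: "0 < NN T * int i + x" "0 < NN T * int j + y" using b NN_pos[of T] by (simp_all add: add_nonneg_pos)
  have "alla T (rev wd) ?q'" using asc wd pos by blast
  hence "L T (fold (F T) (rev wd) ?q') = L T ?q' + int (length (rev wd))" using alla_L g' by blast
  hence l1: "L T (fw T wd ?q') = L T ?q' + int (length wd)" by (simp add: fold_fw)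
  have l2: "L T ?q' = int (cA T) * int i + int (cB T) * int j + L T (x,y)"
    using Lshift b by simp
  have "0 \<le> L T (x,y)" by (rule Lnn)
  thus "L T (Phi T a) = int (cE T (fst (fst a)) + cA T * snd (fst a) + cB T * snd a)"
    using ph l1 l2 a' by (simp add: cE_def)
  have c: "ch T (Phi T a) = wd" using ph ch_unique[OF wd pos] by simp
  have r2: "fw T (rev wd) (Phi T a) = ?q'" using ph fw_rev2 by simp
  have m1: "(NN T * int i + x) mod NN T = x" "(NN T * int j + y) mod NN T = y"
    using b by simp_all
  have d1: "(NN T * int i + x) div NN T = int i" "(NN T * int j + y) div NN T = int j"
    using b by simp_all
  show "Psi T (Phi T a) = a" unfolding Psi_def Let_def c r2 using m1 d1 a' by simp
qed

lemma Psi_props: assumes g: "gp T q" shows "Psi T q \<in> Dom T" "Phi T (Psi T q) = q"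
proof -
  let ?wd = "ch T q"
  let ?q' = "fw T (rev ?wd) q"
  obtain X Y where q': "?q' = (X,Y)" by (metis prod.collapse)
  have wd: "?wd \<in> set (W0 T)" and dq: "dm ?q'" using ch_prop[OF g] by auto
  have pos: "0 < X" "0 < Y" using dq q' by (auto simp: dm_def)
  have gq': "gp T (X,Y)" using gp_fw[OF g] q' by metis
  have N: "0 < NN T" by (rule NN_pos)
  have ex: "X = NN T * (X div NN T) + X mod NN T" "Y = NN T * (Y div NN T) + Y mod NN T" by simp_all
  have gr: "gp T (X mod NN T, Y mod NN T)"
    using gq' gpshift[of T "X div NN T" "X mod NN T" "Y div NN T" "Y mod NN T"] ex by simp
  have r: "(X mod NN T, Y mod NN T) \<in> set (R T)"
    by (rule res[OF gr]) (use N in simp_all)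
  have psi: "Psi T q = (((?wd, (X mod NN T, Y mod NN T)), nat (X div NN T)), nat (Y div NN T))"
    by (simp add: Psi_def Let_def q')
  show "Psi T q \<in> Dom T" using psi wd r by (simp add: Elist_mem)
  have nn: "0 \<le> X div NN T" "0 \<le> Y div NN T" using pos N by (simp_all add: pos_imp_zdiv_nonneg_iff)
  have "Phi T (Psi T q) = fw T ?wd (X, Y)"
    using psi nn ex by (simp add: Phi_def)
  also have "\<dots> = q" using q'[symmetric] fw_rev by metis
  finally show "Phi T (Psi T q) = q" .
qed

lemma Phi_bij: "bij_betw (Phi T) (Dom T) {q. gp T q}"
proof (rule bij_betw_byWitness[where f'="Psi T"])
  show "\<forall>a\<in>Dom T. Psi T (Phi T a) = a" using Phi_props(3) by blast
  show "\<forall>a'\<in>{q. gp T q}. Phi T (Psi T a') = a'" using Psi_props(2) by blast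
  show "Phi T ` Dom T \<subseteq> {q. gp T q}" using Phi_props(1) by blast
  show "Psi T ` {q. gp T q} \<subseteq> Dom T"
  proof
    fix a assume "a \<in> Psi T ` {q. gp T q}"
    then obtain q where "gp T q" "a = Psi T q" by blast
    thus "a \<in> Dom T" using Psi_props(1) by blast
  qed
qed

lemma Wgrp_pts: "Wgrp T = pcls T ` {q. gp T q}"
proof
  show "Wgrp T \<subseteq> pcls T ` {q. gp T q}"
    unfolding Wgrp_def using cls_pcls gp_fw0 by blast
  show "pcls T ` {q. gp T q} \<subseteq> Wgrp T"
  proof
    fix x assume "x \<in> pcls T ` {q. gp T q}"
    then obtain q where "gp T q" "x = pcls T q" by auto
    then obtain w where "q = fw T w p0" using pcls_ex by blast
    thus "x \<in> Wgrp T" using \<open>x = pcls T q\<close> cls_pcls unfolding Wgrp_def by auto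
  qed
qed

lemma WI_pts: "WI T I = pcls T ` ((\<lambda>w. fw T w p0) ` {w. set w \<subseteq> I})"
  unfolding WI_def image_image using cls_pcls by (intro image_cong) auto

lemma Hset_pts: "Hset T w = pcls T ` range (\<lambda>k. fw T (concat (replicate k w)) p0)"
  unfolding Hset_def using cls_pcls by auto

lemma Wser: "gser T (Wgrp T) * ((1 - fps_X ^ cA T) * (1 - fps_X ^ cB T)) = (\<Sum>e\<in>set (Elist T). fps_X ^ cE T e)"
proof -
  have A: "0 < cA T" "0 < cB T" by (cases T; simp)+
  have "gser T (Wgrp T) = cser {q. gp T q} (\<lambda>q. nat (L T q))"
    unfolding Wgrp_pts by (rule gser_pcls) auto
  also have "\<dots> = cser (Dom T) (\<lambda>(x, j). (\<lambda>(e, i). cE T e + cA T * i) x + cB T * j)"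
  proof (rule cser_bij[symmetric, OF Phi_bij])
    fix a assume a: "a \<in> Dom T"
    have "nat (L T (Phi T a)) = cE T (fst (fst a)) + cA T * snd (fst a) + cB T * snd a"
      by (simp only: Phi_props(2)[OF a] nat_int)
    thus "nat (L T (Phi T a)) = (\<lambda>(x, j). (\<lambda>(e, i). cE T e + cA T * i) x + cB T * j) a"
      by (cases a) auto
  qed
  finally have 1: "gser T (Wgrp T) = cser (Dom T) (\<lambda>(x, j). (\<lambda>(e, i). cE T e + cA T * i) x + cB T * j)" .
  have fin1: "finite {x \<in> set (Elist T) \<times> UNIV. (\<lambda>(e, i). cE T e + cA T * i) x \<le> n}" for n
  proof (rule finite_subset)
    show "{x \<in> set (Elist T) \<times> UNIV. (\<lambda>(e, i). cE T e + cA T * i) x \<le> n} \<subseteq> set (Elist T) \<times> {..n}"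
    proof
      fix x assume "x \<in> {x \<in> set (Elist T) \<times> UNIV. (\<lambda>(e, i). cE T e + cA T * i) x \<le> n}"
      then obtain e i where ei: "x = (e,i)" "e \<in> set (Elist T)" "cE T e + cA T * i \<le> n" by auto
      have "i \<le> cA T * i" using A by simp
      hence "i \<le> n" using ei(3) by linarith
      thus "x \<in> set (Elist T) \<times> {..n}" using ei by auto
    qed
  qed auto
  have 2: "cser (Dom T) (\<lambda>(x, j). (\<lambda>(e, i). cE T e + cA T * i) x + cB T * j) * (1 - fps_X ^ cB T)
      = cser (set (Elist T) \<times> UNIV) (\<lambda>(e, i). cE T e + cA T * i)"
    by (rule cser_shift[OF fin1 A(2)])
  have 3: "cser (set (Elist T) \<times> UNIV) (\<lambda>(e, i). cE T e + cA T * i) * (1 - fps_X ^ cA T) = cser (set (Elist T)) (cE T)"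
    by (rule cser_shift[OF _ A(1)]) auto
  have 4: "cser (set (Elist T)) (cE T) = (\<Sum>e\<in>set (Elist T). fps_X ^ cE T e)"
    by (rule cser_finite) simp
  have "cser (Dom T) (\<lambda>(x, j). (\<lambda>(e, i). cE T e + cA T * i) x + cB T * j) * ((1 - fps_X ^ cA T) * (1 - fps_X ^ cB T))
     = (cser (Dom T) (\<lambda>(x, j). (\<lambda>(e, i). cE T e + cA T * i) x + cB T * j) * (1 - fps_X ^ cB T)) * (1 - fps_X ^ cA T)"
    by (simp only: mult_ac)
  thus ?thesis unfolding 1 2 3 4 .
qed






lemma Hser_gen: assumes p: "p0 \<in> SS" and inv: "\<forall>q\<in>SS. gp T q \<and> alla T (rev w) q \<and> fw T w q \<in> SS"
  and lw: "0 < length w"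
  shows "gser T (Hset T w) * (1 - fps_X ^ length w) = 1"
proof -
  define P where "P k = fw T (concat (replicate k w)) p0" for k
  have PS: "P k \<in> SS \<and> L T (P k) = int (k * length w)" for k
  proof (induction k)
    case 0 show ?case using p by (simp add: P_def L0)
  next
    case (Suc k)
    have e: "P (Suc k) = fw T w (P k)" by (simp add: P_def)
    have i: "gp T (P k)" "alla T (rev w) (P k)" "fw T w (P k) \<in> SS" using Suc.IH inv by auto
    have "L T (fold (F T) (rev w) (P k)) = L T (P k) + int (length (rev w))" using alla_L[OF i(1,2)] by blast
    hence "L T (fw T w (P k)) = L T (P k) + int (length w)" by (simp add: fold_fw)
    thus ?case using e i(3) Suc.IH by simp
  qed
  have gpP: "gp T (P k)" for k using PS inv by blast
  have PN: "nat (L T (P k)) = 0 + length w * k" for k using PS[of k] by (simp add: mult.commute flip: of_nat_mult)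
  have inj: "inj P"
  proof (rule injI)
    fix k k' assume "P k = P k'"
    hence "int (k * length w) = int (k' * length w)" using PS by metis
    thus "k = k'" using lw by simp
  qed
  have r: "(\<lambda>k. fw T (concat (replicate k w)) p0) = P" by (simp add: fun_eq_iff P_def)
  have "gser T (Hset T w) = cser (range P) (\<lambda>q. nat (L T q))"
    unfolding Hset_pts r by (rule gser_pcls) (use gpP in auto)
  also have "\<dots> = cser (UNIV :: nat set) (\<lambda>k. 0 + length w * k)"
    by (rule cser_bij[symmetric]) (use inj PN in \<open>auto simp: bij_betw_def\<close>)
  also have "\<dots> = cser ({()} \<times> (UNIV :: nat set)) (\<lambda>(x, i). (\<lambda>_. 0) x + length w * i)"
    by (rule cser_bij[where h="\<lambda>k. ((), k)"]) (auto simp: bij_betw_def inj_on_def)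
  finally have 1: "gser T (Hset T w) = cser ({()} \<times> (UNIV :: nat set)) (\<lambda>(x, i). (\<lambda>_. 0) x + length w * i)" .
  have 2: "cser ({()} \<times> (UNIV :: nat set)) (\<lambda>(x, i). (\<lambda>_. 0) x + length w * i) * (1 - fps_X ^ length w) = cser {()} (\<lambda>_. 0)"
    by (rule cser_shift[OF _ lw]) auto
  have 3: "cser {()} (\<lambda>_. 0) = 1" by (subst cser_finite) auto
  show ?thesis using 1 2 3 by simp
qed

lemma pts_closure:
  assumes "\<forall>d\<in>set D. set d \<subseteq> I" "[] \<in> set D"
    "\<forall>d\<in>set D. \<forall>x\<in>I. F T x (fw T d p0) \<in> (\<lambda>d. fw T d p0) ` set D"
  shows "(\<lambda>w. fw T w p0) ` {w. set w \<subseteq> I} = (\<lambda>d. fw T d p0) ` set D"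
proof
  show "(\<lambda>d. fw T d p0) ` set D \<subseteq> (\<lambda>w. fw T w p0) ` {w. set w \<subseteq> I}" using assms(1) by auto
  have "set w \<subseteq> I \<Longrightarrow> fw T w p0 \<in> (\<lambda>d. fw T d p0) ` set D" for w
  proof (induction w)
    case Nil thus ?case using assms(2) by force
  next
    case (Cons x w)
    then obtain d where d: "d \<in> set D" "fw T w p0 = fw T d p0" by auto
    have "x \<in> I" using Cons.prems by simp
    thus ?case using assms(3) d by simp
  qed
  thus "(\<lambda>w. fw T w p0) ` {w. set w \<subseteq> I} \<subseteq> (\<lambda>d. fw T d p0) ` set D" by auto
qed

lemma WI_fin:
  assumes "\<forall>d\<in>set D. set d \<subseteq> I" "[] \<in> set D"
    "\<forall>d\<in>set D. \<forall>x\<in>I. F T x (fw T d p0) \<in> (\<lambda>d. fw T d p0) ` set D"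
  shows "gser T (WI T I) = (\<Sum>q\<in>set (remdups (map (\<lambda>d. fw T d p0) D)). fps_X ^ nat (L T q))"
proof -
  have "gser T (WI T I) = cser ((\<lambda>d. fw T d p0) ` set D) (\<lambda>q. nat (L T q))"
    unfolding WI_pts pts_closure[OF assms] by (rule gser_pcls) (auto intro: gp_fw0)
  also have "\<dots> = (\<Sum>q\<in>(\<lambda>d. fw T d p0) ` set D. fps_X ^ nat (L T q))" by (rule cser_finite) simp
  finally show ?thesis by simp
qed

lemma prod_Pow_insert: assumes "finite A" "a \<notin> A"
  shows "prod f (Pow (insert a A)) = prod f (Pow A) * prod (\<lambda>B. f (insert a B)) (Pow A)"
proof -
  have d: "Pow A \<inter> insert a ` Pow A = {}" using assms(2) by auto
  have i: "inj_on (insert a) (Pow A)"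
  proof (rule inj_onI)
    fix x y assume xy: "x \<in> Pow A" "y \<in> Pow A" "insert a x = insert a y"
    have "a \<notin> x" "a \<notin> y" using assms(2) xy by auto
    thus "x = y" using xy(3) insert_ident by metis
  qed
  have "prod f (Pow (insert a A)) = prod f (Pow A \<union> insert a ` Pow A)" by (simp add: Pow_insert)
  also have "\<dots> = prod f (Pow A) * prod f (insert a ` Pow A)"
    by (rule prod.union_disjoint) (use assms d in auto)
  also have "prod f (insert a ` Pow A) = prod (\<lambda>B. f (insert a B)) (Pow A)"
    by (subst prod.reindex[OF i]) simp
  finally show ?thesis .
qed

lemma WI_S: "WI T {s1, s2, s3} = Wgrp T"
proof -
  have "{w. set w \<subseteq> {s1, s2, s3}} = UNIV"
  proof -
    have "x \<in> {s1,s2,s3}" for x by (cases x) auto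
    thus ?thesis by auto
  qed
  thus ?thesis by (simp add: WI_def Wgrp_def)
qed

lemma Alt_expand: "Alt T = gser T (Wgrp T) * inverse (gser T (WI T {s1, s2})) * inverse (gser T (WI T {s1, s3})) *
    inverse (gser T (WI T {s2, s3})) * gser T (WI T {s1}) * gser T (WI T {s2}) * gser T (WI T {s3}) * inverse (gser T (WI T {}))"
proof -
  have c: "card S = 3" by (simp add: S_def)
  show ?thesis unfolding Alt_def c unfolding S_def
    by (simp add: prod_Pow_insert WI_S mult_ac)
qed

lemma final_alg:
  fixes a Q PW g D H1 H2 u v Alt :: "real fps"
  assumes aQ: "a * Q = PW" and Q0: "Q $ 0 \<noteq> 0" and D0: "D $ 0 \<noteq> 0"
    and poly: "PW * g * (u * v) = Q * D"
    and Alt: "Alt = a * g * inverse D"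
    and H1: "H1 * u = 1" and H2: "H2 * v = 1"
  shows "H1 * H2 = Alt" "inverse Alt = u * v"
proof -
  have a: "a = PW * inverse Q"
  proof -
    have "a = a * (Q * inverse Q)" using inverse_mult_eq_1'[OF Q0] by simp
    also have "\<dots> = (a * Q) * inverse Q" by (simp only: mult.assoc)
    finally show ?thesis using aQ by simp
  qed
  have 1: "Alt * (u * v) = 1"
  proof -
    have "Alt * (u * v) = (PW * g * (u * v)) * (inverse Q * inverse D)" using Alt a by (simp add: mult_ac)
    also have "\<dots> = (Q * inverse Q) * (D * inverse D)" using poly by (simp add: mult_ac)
    also have "\<dots> = 1" using inverse_mult_eq_1'[OF Q0] inverse_mult_eq_1'[OF D0] by simp
    finally show ?thesis .
  qed
  show "inverse Alt = u * v" by (rule fps_inverse_unique[OF 1])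
  have "H1 * H2 = H1 * H2 * (Alt * (u * v))" using 1 by simp
  also have "\<dots> = Alt * (H1 * u) * (H2 * v)" by (simp add: mult_ac)
  also have "\<dots> = Alt" using H1 H2 by simp
  finally show "H1 * H2 = Alt" .
qed

lemma Elist_sum: "(\<Sum>e\<in>set (Elist T). fps_X ^ cE T e) = (\<Sum>wd\<in>set (W0 T). fps_X ^ length wd) * (\<Sum>r\<in>set (R T). (fps_X ^ nat (L T r) :: real fps))"
proof -
  have "set (Elist T) = set (W0 T) \<times> set (R T)" by (auto simp: Elist_mem)
  hence "(\<Sum>e\<in>set (Elist T). fps_X ^ cE T e) = (\<Sum>wd\<in>set (W0 T). \<Sum>r\<in>set (R T). (fps_X ^ length wd * fps_X ^ nat (L T r) :: real fps))"
    by (simp add: sum.cartesian_product cE_def power_add split_def)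
  thus ?thesis by (simp add: sum_product)
qed





lemma H_A2t_1: "gser A2t (Hset A2t (word1 A2t)) * (1 - fps_X ^ 3) = 1"
proof -
  define SS where "SS = {q. \<exists>j::int. 0 \<le> j \<and> (q = (3 * (0 + 3 * (j)) + 1, 3 * (0 + 0 * (j)) + 1) \<or> q = (3 * (1 + 3 * (j)) + 2, 3 * (0 + 0 * (j)) + 2))}"
  have p: "p0 \<in> SS" unfolding SS_def by (rule CollectI, rule exI[of _ 0]) simp
  have inv: "\<forall>q\<in>SS. gp A2t q \<and> alla A2t (rev (word1 A2t)) q \<and> fw A2t (word1 A2t) q \<in> SS"
  proof
    fix q assume "q \<in> SS"
    then obtain j where j: "0 \<le> j" "q = (3 * (0 + 3 * (j)) + 1, 3 * (0 + 0 * (j)) + 1) \<or> q = (3 * (1 + 3 * (j)) + 2, 3 * (0 + 0 * (j)) + 2)" unfolding SS_def by blast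
    from j(2) show "gp A2t q \<and> alla A2t (rev (word1 A2t)) q \<and> fw A2t (word1 A2t) q \<in> SS"
    proof
      assume q: "q = (3 * (0 + 3 * (j)) + 1, 3 * (0 + 0 * (j)) + 1)"
      have g: "gp A2t ((3 * (0 + 3 * (j)) + 1, 3 * (0 + 0 * (j)) + 1))" by (subst gpshift_A2t) (simp add: gp_def)
      have a: "alla A2t (rev (word1 A2t)) ((3 * (0 + 3 * (j)) + 1, 3 * (0 + 0 * (j)) + 1))" using j(1) by simp
      have f: "fw A2t (word1 A2t) ((3 * (0 + 3 * (j)) + 1, 3 * (0 + 0 * (j)) + 1)) = (3 * (1 + 3 * (j)) + 2, 3 * (0 + 0 * (j)) + 2)" by (simp add: algebra_simps)
      have "fw A2t (word1 A2t) q \<in> SS" unfolding SS_def using f q j(1) by blast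
      thus ?thesis using g a q by simp
    next
      assume q: "q = (3 * (1 + 3 * (j)) + 2, 3 * (0 + 0 * (j)) + 2)"
      have g: "gp A2t ((3 * (1 + 3 * (j)) + 2, 3 * (0 + 0 * (j)) + 2))" by (subst gpshift_A2t) (simp add: gp_def)
      have a: "alla A2t (rev (word1 A2t)) ((3 * (1 + 3 * (j)) + 2, 3 * (0 + 0 * (j)) + 2))" using j(1) by simp
      have f: "fw A2t (word1 A2t) ((3 * (1 + 3 * (j)) + 2, 3 * (0 + 0 * (j)) + 2)) = (3 * (0 + 3 * (j + 1)) + 1, 3 * (0 + 0 * (j + 1)) + 1)" by (simp add: algebra_simps)
      have j1: "0 \<le> j + 1" using j(1) by simp
      have "fw A2t (word1 A2t) q \<in> SS" unfolding SS_def using f q j1 by blast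
      thus ?thesis using g a q by simp
    qed
  qed
  have "gser A2t (Hset A2t (word1 A2t)) * (1 - fps_X ^ length (word1 A2t)) = 1"
    by (rule Hser_gen[OF p inv]) simp
  moreover have lw: "length (word1 A2t) = 3" by simp
  ultimately show ?thesis by (simp only: lw)
qed

lemma H_A2t_2: "gser A2t (Hset A2t (word2 A2t)) * (1 - fps_X ^ 3) = 1"
proof -
  define SS where "SS = {q. \<exists>j::int. 0 \<le> j \<and> (q = (3 * (0 + 0 * (j)) + 1, 3 * (0 + 3 * (j)) + 1) \<or> q = (3 * (0 + 0 * (j)) + 2, 3 * (1 + 3 * (j)) + 2))}"
  have p: "p0 \<in> SS" unfolding SS_def by (rule CollectI, rule exI[of _ 0]) simp
  have inv: "\<forall>q\<in>SS. gp A2t q \<and> alla A2t (rev (word2 A2t)) q \<and> fw A2t (word2 A2t) q \<in> SS"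
  proof
    fix q assume "q \<in> SS"
    then obtain j where j: "0 \<le> j" "q = (3 * (0 + 0 * (j)) + 1, 3 * (0 + 3 * (j)) + 1) \<or> q = (3 * (0 + 0 * (j)) + 2, 3 * (1 + 3 * (j)) + 2)" unfolding SS_def by blast
    from j(2) show "gp A2t q \<and> alla A2t (rev (word2 A2t)) q \<and> fw A2t (word2 A2t) q \<in> SS"
    proof
      assume q: "q = (3 * (0 + 0 * (j)) + 1, 3 * (0 + 3 * (j)) + 1)"
      have g: "gp A2t ((3 * (0 + 0 * (j)) + 1, 3 * (0 + 3 * (j)) + 1))" by (subst gpshift_A2t) (simp add: gp_def)
      have a: "alla A2t (rev (word2 A2t)) ((3 * (0 + 0 * (j)) + 1, 3 * (0 + 3 * (j)) + 1))" using j(1) by simp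
      have f: "fw A2t (word2 A2t) ((3 * (0 + 0 * (j)) + 1, 3 * (0 + 3 * (j)) + 1)) = (3 * (0 + 0 * (j)) + 2, 3 * (1 + 3 * (j)) + 2)" by (simp add: algebra_simps)
      have "fw A2t (word2 A2t) q \<in> SS" unfolding SS_def using f q j(1) by blast
      thus ?thesis using g a q by simp
    next
      assume q: "q = (3 * (0 + 0 * (j)) + 2, 3 * (1 + 3 * (j)) + 2)"
      have g: "gp A2t ((3 * (0 + 0 * (j)) + 2, 3 * (1 + 3 * (j)) + 2))" by (subst gpshift_A2t) (simp add: gp_def)
      have a: "alla A2t (rev (word2 A2t)) ((3 * (0 + 0 * (j)) + 2, 3 * (1 + 3 * (j)) + 2))" using j(1) by simp
      have f: "fw A2t (word2 A2t) ((3 * (0 + 0 * (j)) + 2, 3 * (1 + 3 * (j)) + 2)) = (3 * (0 + 0 * (j + 1)) + 1, 3 * (0 + 3 * (j + 1)) + 1)" by (simp add: algebra_simps)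
      have j1: "0 \<le> j + 1" using j(1) by simp
      have "fw A2t (word2 A2t) q \<in> SS" unfolding SS_def using f q j1 by blast
      thus ?thesis using g a q by simp
    qed
  qed
  have "gser A2t (Hset A2t (word2 A2t)) * (1 - fps_X ^ length (word2 A2t)) = 1"
    by (rule Hser_gen[OF p inv]) simp
  moreover have lw: "length (word2 A2t) = 3" by simp
  ultimately show ?thesis by (simp only: lw)
qed

lemma WI_A2t_e: "gser A2t (WI A2t {}) = 1"
proof -
  have "gser A2t (WI A2t {}) = (\<Sum>q\<in>set (remdups (map (\<lambda>d. fw A2t d p0) [[]])). fps_X ^ nat (L A2t q))"
    by (rule WI_fin) simp_all
  also have "\<dots> = 1" by (simp add: L_def; algebra)
  finally show ?thesis .
qed

lemma WI_A2t_1: "gser A2t (WI A2t {s1}) = (1 + fps_X)"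
proof -
  have "gser A2t (WI A2t {s1}) = (\<Sum>q\<in>set (remdups (map (\<lambda>d. fw A2t d p0) [[], [s1]])). fps_X ^ nat (L A2t q))"
    by (rule WI_fin) simp_all
  also have "\<dots> = (1 + fps_X)" by (simp add: L_def; algebra)
  finally show ?thesis .
qed

lemma WI_A2t_2: "gser A2t (WI A2t {s2}) = (1 + fps_X)"
proof -
  have "gser A2t (WI A2t {s2}) = (\<Sum>q\<in>set (remdups (map (\<lambda>d. fw A2t d p0) [[], [s2]])). fps_X ^ nat (L A2t q))"
    by (rule WI_fin) simp_all
  also have "\<dots> = (1 + fps_X)" by (simp add: L_def; algebra)
  finally show ?thesis .
qed

lemma WI_A2t_3: "gser A2t (WI A2t {s3}) = (1 + fps_X)"
proof -
  have "gser A2t (WI A2t {s3}) = (\<Sum>q\<in>set (remdups (map (\<lambda>d. fw A2t d p0) [[], [s3]])). fps_X ^ nat (L A2t q))"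
    by (rule WI_fin) simp_all
  also have "\<dots> = (1 + fps_X)" by (simp add: L_def; algebra)
  finally show ?thesis .
qed

lemma WI_A2t_12: "gser A2t (WI A2t {s1, s2}) = ((1 + fps_X) * (1 + fps_X + fps_X ^ 2))"
proof -
  have "gser A2t (WI A2t {s1, s2}) = (\<Sum>q\<in>set (remdups (map (\<lambda>d. fw A2t d p0) [[], [s1], [s1, s2], [s1, s2, s1], [s2], [s2, s1]])). fps_X ^ nat (L A2t q))"
    by (rule WI_fin) simp_all
  also have "\<dots> = ((1 + fps_X) * (1 + fps_X + fps_X ^ 2))" by (simp add: L_def; algebra)
  finally show ?thesis .
qed

lemma WI_A2t_23: "gser A2t (WI A2t {s2, s3}) = ((1 + fps_X) * (1 + fps_X + fps_X ^ 2))"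
proof -
  have "gser A2t (WI A2t {s2, s3}) = (\<Sum>q\<in>set (remdups (map (\<lambda>d. fw A2t d p0) [[], [s2], [s2, s3], [s2, s3, s2], [s3], [s3, s2]])). fps_X ^ nat (L A2t q))"
    by (rule WI_fin) simp_all
  also have "\<dots> = ((1 + fps_X) * (1 + fps_X + fps_X ^ 2))" by (simp add: L_def; algebra)
  finally show ?thesis .
qed

lemma WI_A2t_13: "gser A2t (WI A2t {s1, s3}) = ((1 + fps_X) * (1 + fps_X + fps_X ^ 2))"
proof -
  have "gser A2t (WI A2t {s1, s3}) = (\<Sum>q\<in>set (remdups (map (\<lambda>d. fw A2t d p0) [[], [s1], [s1, s3], [s1, s3, s1], [s3], [s3, s1]])). fps_X ^ nat (L A2t q))"
    by (rule WI_fin) simp_all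
  also have "\<dots> = ((1 + fps_X) * (1 + fps_X + fps_X ^ 2))" by (simp add: L_def; algebra)
  finally show ?thesis .
qed

lemma Wpoly_A2t: "(\<Sum>e\<in>set (Elist A2t). fps_X ^ cE A2t e) = (((1 + fps_X) * (1 + fps_X + fps_X ^ 2)) * (1 + fps_X) :: real fps)"
  unfolding Elist_sum by (simp add: W0.simps R.simps L_def; algebra)

lemma main_A2t: "gser A2t (Hset A2t (word1 A2t)) * gser A2t (Hset A2t (word2 A2t)) = Alt A2t \<and> inverse (Alt A2t) = altinv A2t"
proof -
  have aQ: "gser A2t (Wgrp A2t) * ((1 - fps_X ^ 2) * (1 - fps_X ^ 2)) = ((1 + fps_X) * (1 + fps_X + fps_X ^ 2)) * (1 + fps_X)"
    using Wser[of A2t] Wpoly_A2t by simp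
  have Q0: "((1 - fps_X ^ 2) * (1 - fps_X ^ 2) :: real fps) $ 0 \<noteq> 0" by simp
  have D0: "(((1 + fps_X) * (1 + fps_X + fps_X ^ 2)) * ((1 + fps_X) * (1 + fps_X + fps_X ^ 2)) * ((1 + fps_X) * (1 + fps_X + fps_X ^ 2)) :: real fps) $ 0 \<noteq> 0" by simp
  have poly: "((1 + fps_X) * (1 + fps_X + fps_X ^ 2)) * (1 + fps_X) * ((1 + fps_X) * (1 + fps_X) * (1 + fps_X)) * ((1 - fps_X ^ 3) * (1 - fps_X ^ 3))
     = ((1 - fps_X ^ 2) * (1 - fps_X ^ 2)) * (((1 + fps_X) * (1 + fps_X + fps_X ^ 2)) * ((1 + fps_X) * (1 + fps_X + fps_X ^ 2)) * ((1 + fps_X) * (1 + fps_X + fps_X ^ 2)) :: real fps)" by algebra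
  have Alt: "Alt A2t = gser A2t (Wgrp A2t) * ((1 + fps_X) * (1 + fps_X) * (1 + fps_X)) * inverse (((1 + fps_X) * (1 + fps_X + fps_X ^ 2)) * ((1 + fps_X) * (1 + fps_X + fps_X ^ 2)) * ((1 + fps_X) * (1 + fps_X + fps_X ^ 2)))"
    unfolding Alt_expand WI_A2t_12 WI_A2t_13 WI_A2t_23 WI_A2t_1 WI_A2t_2 WI_A2t_3 WI_A2t_e
    by (simp add: fps_inverse_mult mult_ac)
  note r = final_alg[OF aQ Q0 D0 poly Alt H_A2t_1 H_A2t_2]
  show ?thesis using r by (simp add: power2_eq_square mult_ac)
qed

lemma H_C2t_1: "gser C2t (Hset C2t (word1 C2t)) * (1 - fps_X ^ 4) = 1"
proof -
  define SS where "SS = {q. \<exists>j::int. 0 \<le> j \<and> (q = (4 * (0 + 2 * (j)) + 1, 4 * (0 + 0 * (j)) + 1) \<or> q = (4 * (1 + 2 * (j)) + 1, 4 * (0 + 0 * (j)) + 1))}"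
  have p: "p0 \<in> SS" unfolding SS_def by (rule CollectI, rule exI[of _ 0]) simp
  have inv: "\<forall>q\<in>SS. gp C2t q \<and> alla C2t (rev (word1 C2t)) q \<and> fw C2t (word1 C2t) q \<in> SS"
  proof
    fix q assume "q \<in> SS"
    then obtain j where j: "0 \<le> j" "q = (4 * (0 + 2 * (j)) + 1, 4 * (0 + 0 * (j)) + 1) \<or> q = (4 * (1 + 2 * (j)) + 1, 4 * (0 + 0 * (j)) + 1)" unfolding SS_def by blast
    from j(2) show "gp C2t q \<and> alla C2t (rev (word1 C2t)) q \<and> fw C2t (word1 C2t) q \<in> SS"
    proof
      assume q: "q = (4 * (0 + 2 * (j)) + 1, 4 * (0 + 0 * (j)) + 1)"
      have g: "gp C2t ((4 * (0 + 2 * (j)) + 1, 4 * (0 + 0 * (j)) + 1))" by (subst gpshift_C2t) (simp add: gp_def)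
      have a: "alla C2t (rev (word1 C2t)) ((4 * (0 + 2 * (j)) + 1, 4 * (0 + 0 * (j)) + 1))" using j(1) by simp
      have f: "fw C2t (word1 C2t) ((4 * (0 + 2 * (j)) + 1, 4 * (0 + 0 * (j)) + 1)) = (4 * (1 + 2 * (j)) + 1, 4 * (0 + 0 * (j)) + 1)" by (simp add: algebra_simps)
      have "fw C2t (word1 C2t) q \<in> SS" unfolding SS_def using f q j(1) by blast
      thus ?thesis using g a q by simp
    next
      assume q: "q = (4 * (1 + 2 * (j)) + 1, 4 * (0 + 0 * (j)) + 1)"
      have g: "gp C2t ((4 * (1 + 2 * (j)) + 1, 4 * (0 + 0 * (j)) + 1))" by (subst gpshift_C2t) (simp add: gp_def)
      have a: "alla C2t (rev (word1 C2t)) ((4 * (1 + 2 * (j)) + 1, 4 * (0 + 0 * (j)) + 1))" using j(1) by simp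
      have f: "fw C2t (word1 C2t) ((4 * (1 + 2 * (j)) + 1, 4 * (0 + 0 * (j)) + 1)) = (4 * (0 + 2 * (j + 1)) + 1, 4 * (0 + 0 * (j + 1)) + 1)" by (simp add: algebra_simps)
      have j1: "0 \<le> j + 1" using j(1) by simp
      have "fw C2t (word1 C2t) q \<in> SS" unfolding SS_def using f q j1 by blast
      thus ?thesis using g a q by simp
    qed
  qed
  have "gser C2t (Hset C2t (word1 C2t)) * (1 - fps_X ^ length (word1 C2t)) = 1"
    by (rule Hser_gen[OF p inv]) simp
  moreover have lw: "length (word1 C2t) = 4" by simp
  ultimately show ?thesis by (simp only: lw)
qed

lemma H_C2t_2: "gser C2t (Hset C2t (word2 C2t)) * (1 - fps_X ^ 3) = 1"
proof -
  define SS where "SS = {q. \<exists>j::int. 0 \<le> j \<and> (q = (4 * (0 + 0 * (j)) + 1, 4 * (0 + 2 * (j)) + 1) \<or> q = (4 * (0 + 0 * (j)) + 3, 4 * (0 + 2 * (j)) + 3))}"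
  have p: "p0 \<in> SS" unfolding SS_def by (rule CollectI, rule exI[of _ 0]) simp
  have inv: "\<forall>q\<in>SS. gp C2t q \<and> alla C2t (rev (word2 C2t)) q \<and> fw C2t (word2 C2t) q \<in> SS"
  proof
    fix q assume "q \<in> SS"
    then obtain j where j: "0 \<le> j" "q = (4 * (0 + 0 * (j)) + 1, 4 * (0 + 2 * (j)) + 1) \<or> q = (4 * (0 + 0 * (j)) + 3, 4 * (0 + 2 * (j)) + 3)" unfolding SS_def by blast
    from j(2) show "gp C2t q \<and> alla C2t (rev (word2 C2t)) q \<and> fw C2t (word2 C2t) q \<in> SS"
    proof
      assume q: "q = (4 * (0 + 0 * (j)) + 1, 4 * (0 + 2 * (j)) + 1)"
      have g: "gp C2t ((4 * (0 + 0 * (j)) + 1, 4 * (0 + 2 * (j)) + 1))" by (subst gpshift_C2t) (simp add: gp_def)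
      have a: "alla C2t (rev (word2 C2t)) ((4 * (0 + 0 * (j)) + 1, 4 * (0 + 2 * (j)) + 1))" using j(1) by simp
      have f: "fw C2t (word2 C2t) ((4 * (0 + 0 * (j)) + 1, 4 * (0 + 2 * (j)) + 1)) = (4 * (0 + 0 * (j)) + 3, 4 * (0 + 2 * (j)) + 3)" by (simp add: algebra_simps)
      have "fw C2t (word2 C2t) q \<in> SS" unfolding SS_def using f q j(1) by blast
      thus ?thesis using g a q by simp
    next
      assume q: "q = (4 * (0 + 0 * (j)) + 3, 4 * (0 + 2 * (j)) + 3)"
      have g: "gp C2t ((4 * (0 + 0 * (j)) + 3, 4 * (0 + 2 * (j)) + 3))" by (subst gpshift_C2t) (simp add: gp_def)
      have a: "alla C2t (rev (word2 C2t)) ((4 * (0 + 0 * (j)) + 3, 4 * (0 + 2 * (j)) + 3))" using j(1) by simp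
      have f: "fw C2t (word2 C2t) ((4 * (0 + 0 * (j)) + 3, 4 * (0 + 2 * (j)) + 3)) = (4 * (0 + 0 * (j + 1)) + 1, 4 * (0 + 2 * (j + 1)) + 1)" by (simp add: algebra_simps)
      have j1: "0 \<le> j + 1" using j(1) by simp
      have "fw C2t (word2 C2t) q \<in> SS" unfolding SS_def using f q j1 by blast
      thus ?thesis using g a q by simp
    qed
  qed
  have "gser C2t (Hset C2t (word2 C2t)) * (1 - fps_X ^ length (word2 C2t)) = 1"
    by (rule Hser_gen[OF p inv]) simp
  moreover have lw: "length (word2 C2t) = 3" by simp
  ultimately show ?thesis by (simp only: lw)
qed

lemma WI_C2t_e: "gser C2t (WI C2t {}) = 1"
proof -
  have "gser C2t (WI C2t {}) = (\<Sum>q\<in>set (remdups (map (\<lambda>d. fw C2t d p0) [[]])). fps_X ^ nat (L C2t q))"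
    by (rule WI_fin) simp_all
  also have "\<dots> = 1" by (simp add: L_def; algebra)
  finally show ?thesis .
qed

lemma WI_C2t_1: "gser C2t (WI C2t {s1}) = (1 + fps_X)"
proof -
  have "gser C2t (WI C2t {s1}) = (\<Sum>q\<in>set (remdups (map (\<lambda>d. fw C2t d p0) [[], [s1]])). fps_X ^ nat (L C2t q))"
    by (rule WI_fin) simp_all
  also have "\<dots> = (1 + fps_X)" by (simp add: L_def; algebra)
  finally show ?thesis .
qed

lemma WI_C2t_2: "gser C2t (WI C2t {s2}) = (1 + fps_X)"
proof -
  have "gser C2t (WI C2t {s2}) = (\<Sum>q\<in>set (remdups (map (\<lambda>d. fw C2t d p0) [[], [s2]])). fps_X ^ nat (L C2t q))"
    by (rule WI_fin) simp_all
  also have "\<dots> = (1 + fps_X)" by (simp add: L_def; algebra)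
  finally show ?thesis .
qed

lemma WI_C2t_3: "gser C2t (WI C2t {s3}) = (1 + fps_X)"
proof -
  have "gser C2t (WI C2t {s3}) = (\<Sum>q\<in>set (remdups (map (\<lambda>d. fw C2t d p0) [[], [s3]])). fps_X ^ nat (L C2t q))"
    by (rule WI_fin) simp_all
  also have "\<dots> = (1 + fps_X)" by (simp add: L_def; algebra)
  finally show ?thesis .
qed

lemma WI_C2t_12: "gser C2t (WI C2t {s1, s2}) = ((1 + fps_X) * (1 + fps_X + fps_X ^ 2 + fps_X ^ 3))"
proof -
  have "gser C2t (WI C2t {s1, s2}) = (\<Sum>q\<in>set (remdups (map (\<lambda>d. fw C2t d p0) [[], [s1], [s1, s2], [s1, s2, s1], [s1, s2, s1, s2], [s2], [s2, s1], [s2, s1, s2]])). fps_X ^ nat (L C2t q))"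
    by (rule WI_fin) simp_all
  also have "\<dots> = ((1 + fps_X) * (1 + fps_X + fps_X ^ 2 + fps_X ^ 3))" by (simp add: L_def; algebra)
  finally show ?thesis .
qed

lemma WI_C2t_23: "gser C2t (WI C2t {s2, s3}) = ((1 + fps_X) * (1 + fps_X))"
proof -
  have "gser C2t (WI C2t {s2, s3}) = (\<Sum>q\<in>set (remdups (map (\<lambda>d. fw C2t d p0) [[], [s2], [s2, s3], [s3]])). fps_X ^ nat (L C2t q))"
    by (rule WI_fin) simp_all
  also have "\<dots> = ((1 + fps_X) * (1 + fps_X))" by (simp add: L_def; algebra)
  finally show ?thesis .
qed

lemma WI_C2t_13: "gser C2t (WI C2t {s1, s3}) = ((1 + fps_X) * (1 + fps_X + fps_X ^ 2 + fps_X ^ 3))"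
proof -
  have "gser C2t (WI C2t {s1, s3}) = (\<Sum>q\<in>set (remdups (map (\<lambda>d. fw C2t d p0) [[], [s1], [s1, s3], [s1, s3, s1], [s1, s3, s1, s3], [s3], [s3, s1], [s3, s1, s3]])). fps_X ^ nat (L C2t q))"
    by (rule WI_fin) simp_all
  also have "\<dots> = ((1 + fps_X) * (1 + fps_X + fps_X ^ 2 + fps_X ^ 3))" by (simp add: L_def; algebra)
  finally show ?thesis .
qed

lemma Wpoly_C2t: "(\<Sum>e\<in>set (Elist C2t). fps_X ^ cE C2t e) = (((1 + fps_X) * (1 + fps_X + fps_X ^ 2 + fps_X ^ 3)) * (1 + fps_X + fps_X ^ 2 + fps_X ^ 3) :: real fps)"
  unfolding Elist_sum by (simp add: W0.simps R.simps L_def; algebra)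

lemma main_C2t: "gser C2t (Hset C2t (word1 C2t)) * gser C2t (Hset C2t (word2 C2t)) = Alt C2t \<and> inverse (Alt C2t) = altinv C2t"
proof -
  have aQ: "gser C2t (Wgrp C2t) * ((1 - fps_X ^ 4) * (1 - fps_X ^ 3)) = ((1 + fps_X) * (1 + fps_X + fps_X ^ 2 + fps_X ^ 3)) * (1 + fps_X + fps_X ^ 2 + fps_X ^ 3)"
    using Wser[of C2t] Wpoly_C2t by simp
  have Q0: "((1 - fps_X ^ 4) * (1 - fps_X ^ 3) :: real fps) $ 0 \<noteq> 0" by simp
  have D0: "(((1 + fps_X) * (1 + fps_X + fps_X ^ 2 + fps_X ^ 3)) * ((1 + fps_X) * (1 + fps_X + fps_X ^ 2 + fps_X ^ 3)) * ((1 + fps_X) * (1 + fps_X)) :: real fps) $ 0 \<noteq> 0" by simp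
  have poly: "((1 + fps_X) * (1 + fps_X + fps_X ^ 2 + fps_X ^ 3)) * (1 + fps_X + fps_X ^ 2 + fps_X ^ 3) * ((1 + fps_X) * (1 + fps_X) * (1 + fps_X)) * ((1 - fps_X ^ 4) * (1 - fps_X ^ 3))
     = ((1 - fps_X ^ 4) * (1 - fps_X ^ 3)) * (((1 + fps_X) * (1 + fps_X + fps_X ^ 2 + fps_X ^ 3)) * ((1 + fps_X) * (1 + fps_X + fps_X ^ 2 + fps_X ^ 3)) * ((1 + fps_X) * (1 + fps_X)) :: real fps)" by algebra
  have Alt: "Alt C2t = gser C2t (Wgrp C2t) * ((1 + fps_X) * (1 + fps_X) * (1 + fps_X)) * inverse (((1 + fps_X) * (1 + fps_X + fps_X ^ 2 + fps_X ^ 3)) * ((1 + fps_X) * (1 + fps_X + fps_X ^ 2 + fps_X ^ 3)) * ((1 + fps_X) * (1 + fps_X)))"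
    unfolding Alt_expand WI_C2t_12 WI_C2t_13 WI_C2t_23 WI_C2t_1 WI_C2t_2 WI_C2t_3 WI_C2t_e
    by (simp add: fps_inverse_mult mult_ac)
  note r = final_alg[OF aQ Q0 D0 poly Alt H_C2t_1 H_C2t_2]
  show ?thesis using r by (simp add: power2_eq_square mult_ac)
qed

lemma H_G2t_1: "gser G2t (Hset G2t (word1 G2t)) * (1 - fps_X ^ 3) = 1"
proof -
  define SS where "SS = {q. \<exists>j::int. 0 \<le> j \<and> (q = (6 * (0 + 1 * (j)) + 1, 6 * (0 + -1 * (j)) + 1) \<or> q = (6 * (0 + 1 * (j)) + 3, 6 * (0 + -1 * (j)) + 1))}"
  have p: "p0 \<in> SS" unfolding SS_def by (rule CollectI, rule exI[of _ 0]) simp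
  have inv: "\<forall>q\<in>SS. gp G2t q \<and> alla G2t (rev (word1 G2t)) q \<and> fw G2t (word1 G2t) q \<in> SS"
  proof
    fix q assume "q \<in> SS"
    then obtain j where j: "0 \<le> j" "q = (6 * (0 + 1 * (j)) + 1, 6 * (0 + -1 * (j)) + 1) \<or> q = (6 * (0 + 1 * (j)) + 3, 6 * (0 + -1 * (j)) + 1)" unfolding SS_def by blast
    from j(2) show "gp G2t q \<and> alla G2t (rev (word1 G2t)) q \<and> fw G2t (word1 G2t) q \<in> SS"
    proof
      assume q: "q = (6 * (0 + 1 * (j)) + 1, 6 * (0 + -1 * (j)) + 1)"
      have g: "gp G2t ((6 * (0 + 1 * (j)) + 1, 6 * (0 + -1 * (j)) + 1))" by (subst gpshift_G2t) (simp add: gp_def)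
      have a: "alla G2t (rev (word1 G2t)) ((6 * (0 + 1 * (j)) + 1, 6 * (0 + -1 * (j)) + 1))" using j(1) by simp
      have f: "fw G2t (word1 G2t) ((6 * (0 + 1 * (j)) + 1, 6 * (0 + -1 * (j)) + 1)) = (6 * (0 + 1 * (j)) + 3, 6 * (0 + -1 * (j)) + 1)" by (simp add: algebra_simps)
      have "fw G2t (word1 G2t) q \<in> SS" unfolding SS_def using f q j(1) by blast
      thus ?thesis using g a q by simp
    next
      assume q: "q = (6 * (0 + 1 * (j)) + 3, 6 * (0 + -1 * (j)) + 1)"
      have g: "gp G2t ((6 * (0 + 1 * (j)) + 3, 6 * (0 + -1 * (j)) + 1))" by (subst gpshift_G2t) (simp add: gp_def)
      have a: "alla G2t (rev (word1 G2t)) ((6 * (0 + 1 * (j)) + 3, 6 * (0 + -1 * (j)) + 1))" using j(1) by simp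
      have f: "fw G2t (word1 G2t) ((6 * (0 + 1 * (j)) + 3, 6 * (0 + -1 * (j)) + 1)) = (6 * (0 + 1 * (j + 1)) + 1, 6 * (0 + -1 * (j + 1)) + 1)" by (simp add: algebra_simps)
      have j1: "0 \<le> j + 1" using j(1) by simp
      have "fw G2t (word1 G2t) q \<in> SS" unfolding SS_def using f q j1 by blast
      thus ?thesis using g a q by simp
    qed
  qed
  have "gser G2t (Hset G2t (word1 G2t)) * (1 - fps_X ^ length (word1 G2t)) = 1"
    by (rule Hser_gen[OF p inv]) simp
  moreover have lw: "length (word1 G2t) = 3" by simp
  ultimately show ?thesis by (simp only: lw)
qed

lemma H_G2t_2: "gser G2t (Hset G2t (word2 G2t)) * (1 - fps_X ^ 5) = 1"
proof -
  define SS where "SS = {q. \<exists>j::int. 0 \<le> j \<and> (q = (6 * (0 + 1 * (j)) + 1, 6 * (0 + 0 * (j)) + 1) \<or> q = (6 * (0 + 1 * (j)) + 2, 6 * (0 + 0 * (j)) + 5))}"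
  have p: "p0 \<in> SS" unfolding SS_def by (rule CollectI, rule exI[of _ 0]) simp
  have inv: "\<forall>q\<in>SS. gp G2t q \<and> alla G2t (rev (word2 G2t)) q \<and> fw G2t (word2 G2t) q \<in> SS"
  proof
    fix q assume "q \<in> SS"
    then obtain j where j: "0 \<le> j" "q = (6 * (0 + 1 * (j)) + 1, 6 * (0 + 0 * (j)) + 1) \<or> q = (6 * (0 + 1 * (j)) + 2, 6 * (0 + 0 * (j)) + 5)" unfolding SS_def by blast
    from j(2) show "gp G2t q \<and> alla G2t (rev (word2 G2t)) q \<and> fw G2t (word2 G2t) q \<in> SS"
    proof
      assume q: "q = (6 * (0 + 1 * (j)) + 1, 6 * (0 + 0 * (j)) + 1)"
      have g: "gp G2t ((6 * (0 + 1 * (j)) + 1, 6 * (0 + 0 * (j)) + 1))" by (subst gpshift_G2t) (simp add: gp_def)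
      have a: "alla G2t (rev (word2 G2t)) ((6 * (0 + 1 * (j)) + 1, 6 * (0 + 0 * (j)) + 1))" using j(1) by simp
      have f: "fw G2t (word2 G2t) ((6 * (0 + 1 * (j)) + 1, 6 * (0 + 0 * (j)) + 1)) = (6 * (0 + 1 * (j)) + 2, 6 * (0 + 0 * (j)) + 5)" by (simp add: algebra_simps)
      have "fw G2t (word2 G2t) q \<in> SS" unfolding SS_def using f q j(1) by blast
      thus ?thesis using g a q by simp
    next
      assume q: "q = (6 * (0 + 1 * (j)) + 2, 6 * (0 + 0 * (j)) + 5)"
      have g: "gp G2t ((6 * (0 + 1 * (j)) + 2, 6 * (0 + 0 * (j)) + 5))" by (subst gpshift_G2t) (simp add: gp_def)
      have a: "alla G2t (rev (word2 G2t)) ((6 * (0 + 1 * (j)) + 2, 6 * (0 + 0 * (j)) + 5))" using j(1) by simp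
      have f: "fw G2t (word2 G2t) ((6 * (0 + 1 * (j)) + 2, 6 * (0 + 0 * (j)) + 5)) = (6 * (0 + 1 * (j + 1)) + 1, 6 * (0 + 0 * (j + 1)) + 1)" by (simp add: algebra_simps)
      have j1: "0 \<le> j + 1" using j(1) by simp
      have "fw G2t (word2 G2t) q \<in> SS" unfolding SS_def using f q j1 by blast
      thus ?thesis using g a q by simp
    qed
  qed
  have "gser G2t (Hset G2t (word2 G2t)) * (1 - fps_X ^ length (word2 G2t)) = 1"
    by (rule Hser_gen[OF p inv]) simp
  moreover have lw: "length (word2 G2t) = 5" by simp
  ultimately show ?thesis by (simp only: lw)
qed

lemma WI_G2t_e: "gser G2t (WI G2t {}) = 1"
proof -
  have "gser G2t (WI G2t {}) = (\<Sum>q\<in>set (remdups (map (\<lambda>d. fw G2t d p0) [[]])). fps_X ^ nat (L G2t q))"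
    by (rule WI_fin) simp_all
  also have "\<dots> = 1" by (simp add: L_def; algebra)
  finally show ?thesis .
qed

lemma WI_G2t_1: "gser G2t (WI G2t {s1}) = (1 + fps_X)"
proof -
  have "gser G2t (WI G2t {s1}) = (\<Sum>q\<in>set (remdups (map (\<lambda>d. fw G2t d p0) [[], [s1]])). fps_X ^ nat (L G2t q))"
    by (rule WI_fin) simp_all
  also have "\<dots> = (1 + fps_X)" by (simp add: L_def; algebra)
  finally show ?thesis .
qed

lemma WI_G2t_2: "gser G2t (WI G2t {s2}) = (1 + fps_X)"
proof -
  have "gser G2t (WI G2t {s2}) = (\<Sum>q\<in>set (remdups (map (\<lambda>d. fw G2t d p0) [[], [s2]])). fps_X ^ nat (L G2t q))"
    by (rule WI_fin) simp_all
  also have "\<dots> = (1 + fps_X)" by (simp add: L_def; algebra)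
  finally show ?thesis .
qed

lemma WI_G2t_3: "gser G2t (WI G2t {s3}) = (1 + fps_X)"
proof -
  have "gser G2t (WI G2t {s3}) = (\<Sum>q\<in>set (remdups (map (\<lambda>d. fw G2t d p0) [[], [s3]])). fps_X ^ nat (L G2t q))"
    by (rule WI_fin) simp_all
  also have "\<dots> = (1 + fps_X)" by (simp add: L_def; algebra)
  finally show ?thesis .
qed

lemma WI_G2t_12: "gser G2t (WI G2t {s1, s2}) = ((1 + fps_X) * (1 + fps_X + fps_X ^ 2 + fps_X ^ 3 + fps_X ^ 4 + fps_X ^ 5))"
proof -
  have "gser G2t (WI G2t {s1, s2}) = (\<Sum>q\<in>set (remdups (map (\<lambda>d. fw G2t d p0) [[], [s1], [s1, s2], [s1, s2, s1], [s1, s2, s1, s2], [s1, s2, s1, s2, s1], [s1, s2, s1, s2, s1, s2], [s2], [s2, s1], [s2, s1, s2], [s2, s1, s2, s1], [s2, s1, s2, s1, s2]])). fps_X ^ nat (L G2t q))"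
    by (rule WI_fin) simp_all
  also have "\<dots> = ((1 + fps_X) * (1 + fps_X + fps_X ^ 2 + fps_X ^ 3 + fps_X ^ 4 + fps_X ^ 5))" by (simp add: L_def; algebra)
  finally show ?thesis .
qed

lemma WI_G2t_23: "gser G2t (WI G2t {s2, s3}) = ((1 + fps_X) * (1 + fps_X))"
proof -
  have "gser G2t (WI G2t {s2, s3}) = (\<Sum>q\<in>set (remdups (map (\<lambda>d. fw G2t d p0) [[], [s2], [s2, s3], [s3]])). fps_X ^ nat (L G2t q))"
    by (rule WI_fin) simp_all
  also have "\<dots> = ((1 + fps_X) * (1 + fps_X))" by (simp add: L_def; algebra)
  finally show ?thesis .
qed

lemma WI_G2t_13: "gser G2t (WI G2t {s1, s3}) = ((1 + fps_X) * (1 + fps_X + fps_X ^ 2))"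
proof -
  have "gser G2t (WI G2t {s1, s3}) = (\<Sum>q\<in>set (remdups (map (\<lambda>d. fw G2t d p0) [[], [s1], [s1, s3], [s1, s3, s1], [s3], [s3, s1]])). fps_X ^ nat (L G2t q))"
    by (rule WI_fin) simp_all
  also have "\<dots> = ((1 + fps_X) * (1 + fps_X + fps_X ^ 2))" by (simp add: L_def; algebra)
  finally show ?thesis .
qed

lemma Wpoly_G2t: "(\<Sum>e\<in>set (Elist G2t). fps_X ^ cE G2t e) = (((1 + fps_X) * (1 + fps_X + fps_X ^ 2 + fps_X ^ 3 + fps_X ^ 4 + fps_X ^ 5)) * (1 + fps_X + fps_X ^ 2 + fps_X ^ 3 + fps_X ^ 4 + 2 * fps_X ^ 5 + fps_X ^ 6 + fps_X ^ 7 + fps_X ^ 8 + fps_X ^ 9 + fps_X ^ 10) :: real fps)"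
  unfolding Elist_sum by (simp add: W0.simps R.simps L_def; algebra)

lemma main_G2t: "gser G2t (Hset G2t (word1 G2t)) * gser G2t (Hset G2t (word2 G2t)) = Alt G2t \<and> inverse (Alt G2t) = altinv G2t"
proof -
  have aQ: "gser G2t (Wgrp G2t) * ((1 - fps_X ^ 10) * (1 - fps_X ^ 6)) = ((1 + fps_X) * (1 + fps_X + fps_X ^ 2 + fps_X ^ 3 + fps_X ^ 4 + fps_X ^ 5)) * (1 + fps_X + fps_X ^ 2 + fps_X ^ 3 + fps_X ^ 4 + 2 * fps_X ^ 5 + fps_X ^ 6 + fps_X ^ 7 + fps_X ^ 8 + fps_X ^ 9 + fps_X ^ 10)"
    using Wser[of G2t] Wpoly_G2t by simp
  have Q0: "((1 - fps_X ^ 10) * (1 - fps_X ^ 6) :: real fps) $ 0 \<noteq> 0" by simp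
  have D0: "(((1 + fps_X) * (1 + fps_X + fps_X ^ 2 + fps_X ^ 3 + fps_X ^ 4 + fps_X ^ 5)) * ((1 + fps_X) * (1 + fps_X + fps_X ^ 2)) * ((1 + fps_X) * (1 + fps_X)) :: real fps) $ 0 \<noteq> 0" by simp
  have poly: "((1 + fps_X) * (1 + fps_X + fps_X ^ 2 + fps_X ^ 3 + fps_X ^ 4 + fps_X ^ 5)) * (1 + fps_X + fps_X ^ 2 + fps_X ^ 3 + fps_X ^ 4 + 2 * fps_X ^ 5 + fps_X ^ 6 + fps_X ^ 7 + fps_X ^ 8 + fps_X ^ 9 + fps_X ^ 10) * ((1 + fps_X) * (1 + fps_X) * (1 + fps_X)) * ((1 - fps_X ^ 3) * (1 - fps_X ^ 5))
     = ((1 - fps_X ^ 10) * (1 - fps_X ^ 6)) * (((1 + fps_X) * (1 + fps_X + fps_X ^ 2 + fps_X ^ 3 + fps_X ^ 4 + fps_X ^ 5)) * ((1 + fps_X) * (1 + fps_X + fps_X ^ 2)) * ((1 + fps_X) * (1 + fps_X)) :: real fps)" by algebra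
  have Alt: "Alt G2t = gser G2t (Wgrp G2t) * ((1 + fps_X) * (1 + fps_X) * (1 + fps_X)) * inverse (((1 + fps_X) * (1 + fps_X + fps_X ^ 2 + fps_X ^ 3 + fps_X ^ 4 + fps_X ^ 5)) * ((1 + fps_X) * (1 + fps_X + fps_X ^ 2)) * ((1 + fps_X) * (1 + fps_X)))"
    unfolding Alt_expand WI_G2t_12 WI_G2t_13 WI_G2t_23 WI_G2t_1 WI_G2t_2 WI_G2t_3 WI_G2t_e
    by (simp add: fps_inverse_mult mult_ac)
  note r = final_alg[OF aQ Q0 D0 poly Alt H_G2t_1 H_G2t_2]
  show ?thesis using r by (simp add: power2_eq_square mult_ac)
qed


theorem mainTheorem3:
  fixes T :: afftype
  shows "gser T (Hset T (word1 T)) * gser T (Hset T (word2 T)) = Alt T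
         \<and> inverse (Alt T) = altinv T"
  by (cases T) (simp_all only: main_A2t main_C2t main_G2t)


end
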